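(* Let $n$ be even, $k=k_U+k_V$, and let $\mathbf{H}_{\textup{pk}}=\mathbf{S}\,\mathbf{H}_{\textup{sk}}\,\mathbf{P}$ be a public parity-check matrix of a permuted normalized generalized $(U,U+V)$-code over $\mathbb{F}_3$, as described in the context, with $n_I$ blocks of type I. For a matrix $\mathbf{H}\in\mathbb{F}_3^{(n-k)\times n}$, let $\mathcal{D}_w^{\mathbf{H}}$ be the distribution of $\mathbf{e}\,\mathbf{H}^{\intercal}$ when $\mathbf{e}$ is drawn uniformly at random among $S_w$ (the words of Hamming weight $w$ in $\mathbb{F}_3^n$), and let $\mathcal{U}$ be the uniform distribution over $\mathbb{F}_3^{n-k}$. We have \[ \mathbb{E}_{\mathbf{H}_{\textup{pk}}}\left(\rho(\mathcal{D}_w^{\mathbf{H}_{\textup{pk}}},\mathcal{U})\right)\le\frac12\sqrt{\varepsilon} \] with \[ \varepsilon=\frac{3^{n-k}}{2^{w}\binom{n}{w}}+3^{n/2-k_V}\sum_{j=0}^{n/2}\frac{q_1(j)^2}{2^{j}\binom{n/2}{j}}+3^{n/2-k_U}\sum_{j=0}^{n_I}\frac{\binom{n_I}{j}\binom{n-n_I}{w-j}^2}{\binom{n}{w}^2\,2^{j}}, \] where for $0\le i\le n/2$, \[ q_1(i)=\frac{\binom{n/2}{i}}{\binom{n}{w}2^{w/2}}\sum_{\substack{p=0\\ w+p\equiv 0 \bmod 2}}^{i}\binom{i}{p}\binom{n/2-i}{(w+p)/2-i}2^{3p/2}. \]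
   Context: Setting: $\mathbf{a},\mathbf{b},\mathbf{c},\mathbf{d}\in\mathbb{F}_3^{n/2}$ satisfy $a_id_i-b_ic_i=1$ and $a_ic_i\neq0$ for all $i$ (a UV-normalized mapping). With $\mathbf{A}=\mathbf{Diag}(\mathbf{a})$, $\mathbf{B}=\mathbf{Diag}(\mathbf{b})$, $\mathbf{C}=\mathbf{Diag}(\mathbf{c})$, $\mathbf{D}=\mathbf{Diag}(\mathbf{d})$, the secret parity-check matrix is $\mathbf{H}_{\textup{sk}}=\begin{pmatrix}\mathbf{H}_U\mathbf{D} & -\mathbf{H}_U\mathbf{B}\\ -\mathbf{H}_V\mathbf{C} & \mathbf{H}_V\mathbf{A}\end{pmatrix}$, where $\mathbf{H}_U$ is uniform in $\mathbb{F}_3^{(n/2-k_U)\times n/2}$, $\mathbf{H}_V$ uniform in $\mathbb{F}_3^{(n/2-k_V)\times n/2}$, $\mathbf{S}$ uniform among invertible $(n-k)\times(n-k)$ ternary matrices, and $\mathbf{P}$ a uniform $n\times n$ permutation matrix; the expectation is over this random choice of $\mathbf{H}_{\textup{pk}}$. The number of $V$ blocks of type I is $n_I=|\{1\le i\le n/2: b_id_i=0\}|$. The statistical distance is $\rho(\mathcal{D}_0,\mathcal{D}_1)=\frac12\sum_x|\mathcal{D}_0(x)-\mathcal{D}_1(x)|$. The quantity $q_1(i)$ equals $\mathbb{P}(|\mathbf{e}_V|=i)$ where $\mathbf{e}=(\mathbf{e}_1,\mathbf{e}_2)$ is uniform over words of weight $w$ in $\mathbb{F}_3^n$ and $\mathbf{e}_V=-\mathbf{c}\odot\mathbf{e}_1+\mathbf{a}\odot\mathbf{e}_2$.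 *)

theory Defs
  imports "HOL-Combinatorics.Permutations" Complex_Main
begin

text \<open>Elements of F_3 are represented by the integers 0,1,2; arithmetic is done mod 3.
  Vectors of length m are functions nat \<Rightarrow> int, with entries in {0,1,2} at indices < m
  and 0 elsewhere; an r x c matrix is a function nat \<Rightarrow> nat \<Rightarrow> int similarly.\<close>

definition F3vecs :: "nat \<Rightarrow> (nat \<Rightarrow> int) set" where
  "F3vecs m = {v. (\<forall>i. i < m \<longrightarrow> v i \<in> {0,1,2}) \<and> (\<forall>i. m \<le> i \<longrightarrow> v i = 0)}"

definition F3mats :: "nat \<Rightarrow> nat \<Rightarrow> (nat \<Rightarrow> nat \<Rightarrow> int) set" where
  "F3mats r c = {M. \<forall>i j. (i < r \<and> j < c \<longrightarrow> M i j \<in> {0,1,2})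
                        \<and> (\<not> (i < r \<and> j < c) \<longrightarrow> M i j = 0)}"

definition mmul :: "nat \<Rightarrow> nat \<Rightarrow> nat \<Rightarrow> (nat \<Rightarrow> nat \<Rightarrow> int) \<Rightarrow> (nat \<Rightarrow> nat \<Rightarrow> int)
                     \<Rightarrow> nat \<Rightarrow> nat \<Rightarrow> int" where
  "mmul r l c A B = (\<lambda>i j. if i < r \<and> j < c then (\<Sum>t<l. A i t * B t j) mod 3 else 0)"

definition idmat :: "nat \<Rightarrow> nat \<Rightarrow> nat \<Rightarrow> int" where
  "idmat m = (\<lambda>i j. if i < m \<and> j < m \<and> i = j then 1 else 0)"

definition F3invertible :: "nat \<Rightarrow> (nat \<Rightarrow> nat \<Rightarrow> int) set" where
  "F3invertible m = {S \<in> F3mats m m. \<exists>T \<in> F3mats m m.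
       mmul m m m S T = idmat m \<and> mmul m m m T S = idmat m}"

definition perm_mat :: "nat \<Rightarrow> (nat \<Rightarrow> nat) \<Rightarrow> nat \<Rightarrow> nat \<Rightarrow> int" where
  "perm_mat n \<pi> = (\<lambda>i j. if i < n \<and> j < n \<and> \<pi> i = j then 1 else 0)"

definition hweight :: "nat \<Rightarrow> (nat \<Rightarrow> int) \<Rightarrow> nat" where
  "hweight n e = card {i. i < n \<and> e i \<noteq> 0}"

definition sphere :: "nat \<Rightarrow> nat \<Rightarrow> (nat \<Rightarrow> int) set" where
  "sphere n w = {e \<in> F3vecs n. hweight n e = w}"

definition syndrome :: "nat \<Rightarrow> nat \<Rightarrow> (nat \<Rightarrow> nat \<Rightarrow> int) \<Rightarrow> (nat \<Rightarrow> int) \<Rightarrow> nat \<Rightarrow> int" where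
  "syndrome r n H e = (\<lambda>i. if i < r then (\<Sum>j<n. H i j * e j) mod 3 else 0)"

definition syn_dist :: "nat \<Rightarrow> nat \<Rightarrow> nat \<Rightarrow> (nat \<Rightarrow> nat \<Rightarrow> int) \<Rightarrow> (nat \<Rightarrow> int) \<Rightarrow> real" where
  "syn_dist r n w H s = real (card {e \<in> sphere n w. syndrome r n H e = s}) / real (card (sphere n w))"

definition dist_to_unif :: "nat \<Rightarrow> nat \<Rightarrow> nat \<Rightarrow> (nat \<Rightarrow> nat \<Rightarrow> int) \<Rightarrow> real" where
  "dist_to_unif r n w H = 1/2 * (\<Sum>s \<in> F3vecs r. \<bar>syn_dist r n w H s - 1 / 3 ^ r\<bar>)"

text \<open>Secret parity-check matrix, m = n/2:
  [ H_U D   , -H_U B ]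
  [ -H_V C  ,  H_V A ]\<close>
definition Hsk :: "nat \<Rightarrow> nat \<Rightarrow> nat \<Rightarrow> (nat \<Rightarrow> int) \<Rightarrow> (nat \<Rightarrow> int) \<Rightarrow> (nat \<Rightarrow> int) \<Rightarrow> (nat \<Rightarrow> int)
                  \<Rightarrow> (nat \<Rightarrow> nat \<Rightarrow> int) \<Rightarrow> (nat \<Rightarrow> nat \<Rightarrow> int) \<Rightarrow> nat \<Rightarrow> nat \<Rightarrow> int" where
  "Hsk m kU kV a b c d HU HV = (\<lambda>i j.
     if i < m - kU \<and> j < 2*m then
       (if j < m then HU i j * d j else - HU i (j - m) * b (j - m)) mod 3
     else if m - kU \<le> i \<and> i < (m - kU) + (m - kV) \<and> j < 2*m then
       (if j < m then - HV (i - (m - kU)) j * c j else HV (i - (m - kU)) (j - m) * a (j - m)) mod 3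
     else 0)"

text \<open>Public parity-check matrix H_pk = S H_sk P with n = 2m, n - k = (m-kU)+(m-kV).\<close>
definition Hpk :: "nat \<Rightarrow> nat \<Rightarrow> nat \<Rightarrow> (nat \<Rightarrow> int) \<Rightarrow> (nat \<Rightarrow> int) \<Rightarrow> (nat \<Rightarrow> int) \<Rightarrow> (nat \<Rightarrow> int)
                  \<Rightarrow> (nat \<Rightarrow> nat \<Rightarrow> int) \<Rightarrow> (nat \<Rightarrow> nat \<Rightarrow> int) \<Rightarrow> (nat \<Rightarrow> nat \<Rightarrow> int) \<Rightarrow> (nat \<Rightarrow> nat)
                  \<Rightarrow> nat \<Rightarrow> nat \<Rightarrow> int" where
  "Hpk m kU kV a b c d HU HV S \<pi> =
     (let r = (m - kU) + (m - kV) in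
      mmul r r (2*m) S (mmul r (2*m) (2*m) (Hsk m kU kV a b c d HU HV) (perm_mat (2*m) \<pi>)))"

definition nI :: "nat \<Rightarrow> (nat \<Rightarrow> int) \<Rightarrow> (nat \<Rightarrow> int) \<Rightarrow> nat" where
  "nI m b d = card {i. i < m \<and> (b i * d i) mod 3 = 0}"

text \<open>q_1(i), as given by the explicit formula (binomial with negative lower index = 0).\<close>
definition q1 :: "nat \<Rightarrow> nat \<Rightarrow> nat \<Rightarrow> real" where
  "q1 n w i = real ((n div 2) choose i) / (real (n choose w) * 2 powr (real w / 2)) *
     (\<Sum>p \<in> {p. p \<le> i \<and> even (w + p)}.
        real (i choose p) *
        (if i \<le> (w + p) div 2 then real ((n div 2 - i) choose ((w + p) div 2 - i)) else 0) *
        2 powr (3 * real p / 2))"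

definition eps :: "nat \<Rightarrow> nat \<Rightarrow> nat \<Rightarrow> nat \<Rightarrow> nat \<Rightarrow> real" where
  "eps n kU kV w nI0 =
     3 ^ (n - (kU + kV)) / (2 ^ w * real (n choose w))
   + 3 ^ (n div 2 - kV) * (\<Sum>j=0..n div 2. (q1 n w j)^2 / (2 ^ j * real ((n div 2) choose j)))
   + 3 ^ (n div 2 - kU) * (\<Sum>j=0..nI0.
        real (nI0 choose j) * (if j \<le> w then real ((n - nI0) choose (w - j)) else 0)^2
        / (real (n choose w) ^ 2 * 2 ^ j))"

end

theory Submission
  imports Defs "HOL-Computational_Algebra.Polynomial" "HOL-Analysis.Convex"
begin

definition vset :: "'i set \<Rightarrow> ('i \<Rightarrow> 'x set) \<Rightarrow> 'x \<Rightarrow> ('i \<Rightarrow> 'x) set" where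
  "vset A B z = {v. (\<forall>i\<in>A. v i \<in> B i) \<and> (\<forall>i. i \<notin> A \<longrightarrow> v i = z)}"

lemma vset_bij:
  "bij_betw (\<lambda>v. restrict v A) (vset A B z) (PiE A B)"
  by (rule bij_betw_byWitness[where f'="\<lambda>f i. if i\<in>A then f i else z"])
     (auto simp: vset_def restrict_def PiE_def extensional_def fun_eq_iff)

lemma card_vset: "finite A \<Longrightarrow> card (vset A B z) = (\<Prod>i\<in>A. card (B i))"
  using bij_betw_same_card[OF vset_bij] card_PiE by metis

lemma finite_vset: "finite A \<Longrightarrow> (\<And>i. i \<in> A \<Longrightarrow> finite (B i)) \<Longrightarrow> finite (vset A B z)"
  using bij_betw_finite[OF vset_bij] finite_PiE by metis

lemma cm1: "coeff (monom (1::nat) d * p) k = (if k < d then 0 else coeff p (k - d))"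
  by (simp add: coeff_monom_mult)

lemma card_vset_weight:
  assumes "finite A" "\<forall>i\<in>A. finite (B i)"
  shows "card {v \<in> vset A B z. (\<Sum>i\<in>A. \<omega> (v i)) = k}
         = coeff (\<Prod>i\<in>A. \<Sum>x\<in>B i. monom (1::nat) (\<omega> x)) k"
  using assms
proof (induction A arbitrary: k rule: finite_induct)
  case empty
  have "vset {} B z = {\<lambda>_. z}" by (auto simp: vset_def)
  then show ?case by (auto simp: coeff_1)
next
  case (insert a A)
  let ?T = "{v \<in> vset (insert a A) B z. (\<Sum>i\<in>insert a A. \<omega> (v i)) = k}"
  let ?Q = "\<Prod>i\<in>A. \<Sum>x\<in>B i. monom (1::nat) (\<omega> x)"
  have fB: "finite (B a)" using insert by auto
  have fT: "finite ?T"
    using finite_vset[of "insert a A" B z] insert by auto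
  have "card ?T = (\<Sum>x\<in>B a. card {v \<in> ?T. v a = x})"
  proof -
    have "(\<Sum>x\<in>B a. \<Sum>v\<in>{v. v \<in> ?T \<and> v a = x}. (1::nat)) = (\<Sum>v\<in>?T. 1)"
      by (rule sum.group[OF fT fB]) (auto simp: vset_def)
    then show ?thesis by simp
  qed
  also have "\<dots> = (\<Sum>x\<in>B a. if k < \<omega> x then 0 else coeff ?Q (k - \<omega> x))"
  proof (rule sum.cong[OF refl])
    fix x assume xB: "x \<in> B a"
    show "card {v \<in> ?T. v a = x} = (if k < \<omega> x then 0 else coeff ?Q (k - \<omega> x))"
    proof (cases "k < \<omega> x")
      case True
      have E: "{v \<in> ?T. v a = x} = {}"
      proof -
        { fix v assume "v \<in> ?T" "v a = x"
          then have "\<omega> x + (\<Sum>i\<in>A. \<omega> (v i)) = k" using insert.hyps by simp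
          then have False using True by simp }
        then show ?thesis by blast
      qed
      show ?thesis unfolding E using True by simp
    next
      case False
      let ?S = "{v \<in> vset A B z. (\<Sum>i\<in>A. \<omega> (v i)) = k - \<omega> x}"
      have "bij_betw (\<lambda>v. v(a := x)) ?S {v \<in> ?T. v a = x}"
      proof (rule bij_betw_byWitness[where f'="\<lambda>v. v(a := z)"])
        show "\<forall>v\<in>?S. (v(a := x))(a := z) = v" using insert.hyps by (auto simp: vset_def fun_eq_iff)
        show "\<forall>v\<in>{v \<in> ?T. v a = x}. (v(a := z))(a := x) = v" by (auto simp: fun_eq_iff)
        have sA: "(\<Sum>i\<in>A. \<omega> ((f(a := y)) i)) = (\<Sum>i\<in>A. \<omega> (f i))" for f y
          using insert.hyps by (intro sum.cong) auto
        have sA': "(\<Sum>i\<in>A. \<omega> (if i = a then y else f i)) = (\<Sum>i\<in>A. \<omega> (f i))" for f y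
          using insert.hyps by (intro sum.cong) auto
        show "(\<lambda>v. v(a := x)) ` ?S \<subseteq> {v \<in> ?T. v a = x}"
          using insert.hyps xB False by (auto simp: vset_def sA sA')
        show "(\<lambda>v. v(a := z)) ` {v \<in> ?T. v a = x} \<subseteq> ?S"
          using insert.hyps xB False by (auto simp: vset_def sA sA')
      qed
      then have "card {v \<in> ?T. v a = x} = card ?S" by (simp add: bij_betw_same_card)
      also have "\<dots> = coeff ?Q (k - \<omega> x)" using insert by auto
      finally show ?thesis using False by simp
    qed
  qed
  also have "\<dots> = (\<Sum>x\<in>B a. coeff (monom 1 (\<omega> x) * ?Q) k)"
    by (simp only: cm1)
  also have "\<dots> = coeff ((\<Sum>x\<in>B a. monom 1 (\<omega> x)) * ?Q) k"
    by (simp only: sum_distrib_right coeff_sum)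
  also have "\<dots> = coeff (\<Prod>i\<in>insert a A. \<Sum>x\<in>B i. monom (1::nat) (\<omega> x)) k"
    using insert.hyps by (metis prod.insert)
  finally show ?case .
qed

definition nz :: "int \<Rightarrow> nat" where "nz x = (if x = 0 then 0 else 1)"

lemma poly012: "(\<Sum>x\<in>{0,1,2::int}. monom (1::nat) (nz x)) = [:1, 2:]"
  by (simp add: nz_def monom_altdef numeral_2_eq_2 field_simps) 

lemma coeff_lin_pow: "coeff ([:1, 2:] ^ N) k = (N choose k) * (2::nat) ^ k"
proof (cases "k \<le> N")
  case True then show ?thesis by (simp add: coeff_linear_poly_power)
next
  case False
  have "degree ([:1, 2::nat:] ^ N) \<le> N"
    using degree_power_le[of "[:1,2::nat:]" N] by simp
  then show ?thesis using False by (simp add: coeff_eq_0)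
qed

lemma card_weight_012:
  assumes "finite A"
  shows "card {v \<in> vset A (\<lambda>_. {0,1,2::int}) 0. (\<Sum>i\<in>A. nz (v i)) = k} = (card A choose k) * 2 ^ k"
proof -
  have "card {v \<in> vset A (\<lambda>_. {0,1,2::int}) 0. (\<Sum>i\<in>A. nz (v i)) = k}
     = coeff (\<Prod>i\<in>A. \<Sum>x\<in>{0,1,2::int}. monom (1::nat) (nz x)) k"
    by (rule card_vset_weight) (use assms in auto)
  also have "\<dots> = coeff ([:1,2:] ^ card A) k"
    by (simp only: poly012 prod_constant)
  also have "\<dots> = (card A choose k) * 2 ^ k" by (rule coeff_lin_pow)
  finally show ?thesis .
qed

lemma card_pairs_fibers:
  assumes "finite A" "finite V" "g ` A \<subseteq> V"
  shows "card {p \<in> A \<times> A. g (fst p) = g (snd p)} = (\<Sum>v\<in>V. card {x\<in>A. g x = v} ^ 2)"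
proof -
  let ?P = "{p \<in> A \<times> A. g (fst p) = g (snd p)}"
  have fP: "finite ?P" using assms by auto
  have "(\<Sum>v\<in>V. \<Sum>p\<in>{p. p \<in> ?P \<and> g (fst p) = v}. (1::nat)) = (\<Sum>p\<in>?P. 1)"
    by (rule sum.group[OF fP assms(2)]) (use assms in auto)
  moreover have "{p. p \<in> ?P \<and> g (fst p) = v} = {x\<in>A. g x = v} \<times> {x\<in>A. g x = v}" for v
    by auto
  ultimately show ?thesis by (simp add: power2_eq_square card_cartesian_product)
qed


lemma mod3_cases: "(x::int) mod 3 \<in> {0,1,2}"
  by (auto simp: mod_pos_pos_trivial)

lemma sum_mod_mult: "(\<Sum>j\<in>A. (f j mod m) * g j) mod m = (\<Sum>j\<in>A. f j * g j) mod (m::int)"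
proof -
  have "(\<Sum>j\<in>A. (f j mod m) * g j) mod m = (\<Sum>j\<in>A. ((f j mod m) * g j) mod m) mod m"
    by (simp add: mod_sum_eq)
  also have "\<dots> = (\<Sum>j\<in>A. (f j * g j) mod m) mod m" by (simp add: mod_mult_left_eq)
  also have "\<dots> = (\<Sum>j\<in>A. f j * g j) mod m" by (simp add: mod_sum_eq)
  finally show ?thesis .
qed

lemma sum_mult_mod: "(\<Sum>j\<in>A. g j * (f j mod m)) mod m = (\<Sum>j\<in>A. g j * f j) mod (m::int)"
  using sum_mod_mult[of f m g A] by (simp add: mult.commute)

lemma F3vecs_vset: "F3vecs n = vset {..<n} (\<lambda>_. {0,1,2}) 0"
  by (auto simp: F3vecs_def vset_def not_less)

lemma finite_F3vecs: "finite (F3vecs n)"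
  unfolding F3vecs_vset by (rule finite_vset) auto

lemma card_F3vecs: "card (F3vecs n) = 3 ^ n"
  unfolding F3vecs_vset by (simp add: card_vset numeral_3_eq_3)

lemma hweight_sum: "hweight n e = (\<Sum>i<n. nz (e i))"
  by (simp add: hweight_def nz_def sum.If_cases Int_def lessThan_def conj_commute)

lemma sphere_vset: "sphere n w = {e \<in> vset {..<n} (\<lambda>_. {0,1,2}) 0. (\<Sum>i<n. nz (e i)) = w}"
  by (simp add: sphere_def F3vecs_vset hweight_sum)

lemma card_sphere: "card (sphere n w) = (n choose w) * 2 ^ w"
  unfolding sphere_vset using card_weight_012[of "{..<n}" w] by simp

lemma finite_sphere: "finite (sphere n w)"
  unfolding sphere_def using finite_F3vecs by simp

lemma syndrome_in: "syndrome r n H e \<in> F3vecs r"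
  using mod3_cases by (auto simp: syndrome_def F3vecs_def)

definition linS :: "nat \<Rightarrow> (nat \<Rightarrow> nat \<Rightarrow> int) \<Rightarrow> (nat \<Rightarrow> int) \<Rightarrow> nat \<Rightarrow> int" where
  "linS r S s = (\<lambda>i. if i < r then (\<Sum>t<r. S i t * s t) mod 3 else 0)"

lemma linS_in: "linS r S s \<in> F3vecs r"
  using mod3_cases by (auto simp: linS_def F3vecs_def)

lemma syndrome_mmul:
  "syndrome r n (mmul r r n S M) e = linS r S (syndrome r n M e)"
proof (rule ext)
  fix i
  show "syndrome r n (mmul r r n S M) e i = linS r S (syndrome r n M e) i"
  proof (cases "i < r")
    case True
    have "syndrome r n (mmul r r n S M) e i = (\<Sum>j<n. ((\<Sum>t<r. S i t * M t j) mod 3) * e j) mod 3"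
      using True by (simp add: syndrome_def mmul_def)
    also have "\<dots> = (\<Sum>j<n. (\<Sum>t<r. S i t * M t j) * e j) mod 3" by (rule sum_mod_mult)
    also have "(\<Sum>j<n. (\<Sum>t<r. S i t * M t j) * e j) = (\<Sum>t<r. S i t * (\<Sum>j<n. M t j * e j))"
    proof -
      have "(\<Sum>j<n. (\<Sum>t<r. S i t * M t j) * e j) = (\<Sum>j<n. \<Sum>t<r. S i t * M t j * e j)"
        by (simp add: sum_distrib_right)
      also have "\<dots> = (\<Sum>t<r. \<Sum>j<n. S i t * M t j * e j)" by (rule sum.swap)
      also have "\<dots> = (\<Sum>t<r. S i t * (\<Sum>j<n. M t j * e j))" by (simp add: sum_distrib_left mult.assoc)
      finally show ?thesis .
    qed
    also have "(\<Sum>t<r. S i t * (\<Sum>j<n. M t j * e j)) mod 3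
        = (\<Sum>t<r. S i t * ((\<Sum>j<n. M t j * e j) mod 3)) mod 3" by (rule sum_mult_mod[symmetric])
    also have "\<dots> = linS r S (syndrome r n M e) i"
      using True by (simp add: linS_def syndrome_def)
    finally show ?thesis .
  qed (simp add: syndrome_def linS_def mmul_def)
qed

lemma linS_comp: "linS r T (linS r S s) = linS r (mmul r r r T S) s"
proof (rule ext)
  fix i
  show "linS r T (linS r S s) i = linS r (mmul r r r T S) s i"
  proof (cases "i < r")
    case True
    have "linS r T (linS r S s) i = (\<Sum>t<r. T i t * ((\<Sum>u<r. S t u * s u) mod 3)) mod 3"
      using True by (simp add: linS_def)
    also have "\<dots> = (\<Sum>t<r. T i t * (\<Sum>u<r. S t u * s u)) mod 3" by (rule sum_mult_mod)
    also have "(\<Sum>t<r. T i t * (\<Sum>u<r. S t u * s u)) = (\<Sum>u<r. (\<Sum>t<r. T i t * S t u) * s u)"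
    proof -
      have "(\<Sum>t<r. T i t * (\<Sum>u<r. S t u * s u)) = (\<Sum>t<r. \<Sum>u<r. T i t * S t u * s u)"
        by (simp add: sum_distrib_left mult.assoc)
      also have "\<dots> = (\<Sum>u<r. \<Sum>t<r. T i t * S t u * s u)" by (rule sum.swap)
      also have "\<dots> = (\<Sum>u<r. (\<Sum>t<r. T i t * S t u) * s u)" by (simp add: sum_distrib_right)
      finally show ?thesis .
    qed
    also have "(\<Sum>u<r. (\<Sum>t<r. T i t * S t u) * s u) mod 3
       = (\<Sum>u<r. ((\<Sum>t<r. T i t * S t u) mod 3) * s u) mod 3" by (rule sum_mod_mult[symmetric])
    also have "\<dots> = linS r (mmul r r r T S) s i"
      using True by (simp add: linS_def mmul_def)
    finally show ?thesis .
  qed (simp add: linS_def)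
qed

lemma linS_id: assumes "s \<in> F3vecs r" shows "linS r (idmat r) s = s"
proof (rule ext)
  fix i
  show "linS r (idmat r) s i = s i"
  proof (cases "i < r")
    case True
    have "(\<Sum>t<r. idmat r i t * s t) = (\<Sum>t<r. if t = i then s t else 0)"
      using True by (intro sum.cong) (auto simp: idmat_def)
    also have "\<dots> = s i" using True by (simp add: sum.delta)
    finally have "(\<Sum>t<r. idmat r i t * s t) = s i" .
    moreover have si: "s i \<in> {0,1,2}" using assms True by (auto simp: F3vecs_def)
    ultimately show ?thesis using True by (auto simp: linS_def)
  qed (use assms in \<open>auto simp: linS_def F3vecs_def\<close>)
qed

lemma dist_mmul_inv:
  assumes "S \<in> F3invertible r"
  shows "dist_to_unif r n w (mmul r r n S M) = dist_to_unif r n w M"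
proof -
  obtain T where T: "mmul r r r S T = idmat r" "mmul r r r T S = idmat r"
    using assms by (auto simp: F3invertible_def)
  have TS: "linS r T (linS r S s) = s" if "s \<in> F3vecs r" for s
    using that by (simp add: linS_comp T linS_id)
  have ST: "linS r S (linS r T s) = s" if "s \<in> F3vecs r" for s
    using that by (simp add: linS_comp T linS_id)
  have bij: "bij_betw (linS r T) (F3vecs r) (F3vecs r)"
    by (rule bij_betw_byWitness[where f'="linS r S"]) (use TS ST linS_in in auto)
  have eq: "syn_dist r n w (mmul r r n S M) s = syn_dist r n w M (linS r T s)"
    if s: "s \<in> F3vecs r" for s
  proof -
    have "{e \<in> sphere n w. syndrome r n (mmul r r n S M) e = s}
        = {e \<in> sphere n w. syndrome r n M e = linS r T s}"
    proof -
      have "linS r S (syndrome r n M e) = s \<longleftrightarrow> syndrome r n M e = linS r T s" for e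
        using TS[OF syndrome_in[of r n M e]] ST[OF s] by metis
      then show ?thesis by (simp add: syndrome_mmul)
    qed
    then show ?thesis by (simp add: syn_dist_def)
  qed
  have "(\<Sum>s\<in>F3vecs r. \<bar>syn_dist r n w (mmul r r n S M) s - 1 / 3 ^ r\<bar>)
      = (\<Sum>s\<in>F3vecs r. \<bar>syn_dist r n w M (linS r T s) - 1 / 3 ^ r\<bar>)"
    by (rule sum.cong) (simp_all add: eq)
  also have "\<dots> = (\<Sum>s\<in>F3vecs r. \<bar>syn_dist r n w M s - 1 / 3 ^ r\<bar>)"
    using sum.reindex_bij_betw[OF bij, of "\<lambda>s. \<bar>syn_dist r n w M s - 1 / 3 ^ r\<bar>"] by simp
  finally show ?thesis by (simp add: dist_to_unif_def)
qed

lemma syndrome_perm: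
  assumes p: "\<pi> permutes {..<n}"
  shows "syndrome r n (mmul r n n M (perm_mat n \<pi>)) e = syndrome r n M (e \<circ> \<pi>)"
proof (rule ext)
  fix i
  show "syndrome r n (mmul r n n M (perm_mat n \<pi>)) e i = syndrome r n M (e \<circ> \<pi>) i"
  proof (cases "i < r")
    case True
    have col: "(\<Sum>t<n. M i t * perm_mat n \<pi> t j) = M i (inv \<pi> j)" if j: "j < n" for j
    proof -
      have "(\<Sum>t<n. M i t * perm_mat n \<pi> t j) = (\<Sum>t<n. if t = inv \<pi> j then M i t else 0)"
        using j p by (intro sum.cong) (auto simp: perm_mat_def permutes_inverses
            permutes_inv_eq)
      also have "\<dots> = M i (inv \<pi> j)"
      proof -
        have "inv \<pi> j < n" using permutes_in_image[OF permutes_inv[OF p]] j by auto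
        then show ?thesis by (simp add: sum.delta')
      qed
      finally show ?thesis .
    qed
    have "syndrome r n (mmul r n n M (perm_mat n \<pi>)) e i
        = (\<Sum>j<n. ((\<Sum>t<n. M i t * perm_mat n \<pi> t j) mod 3) * e j) mod 3"
      using True by (simp add: syndrome_def mmul_def)
    also have "\<dots> = (\<Sum>j<n. (\<Sum>t<n. M i t * perm_mat n \<pi> t j) * e j) mod 3"
      by (rule sum_mod_mult)
    also have "(\<Sum>j<n. (\<Sum>t<n. M i t * perm_mat n \<pi> t j) * e j) = (\<Sum>j<n. M i (inv \<pi> j) * e j)"
      by (rule sum.cong) (simp_all add: col)
    also have "\<dots> = (\<Sum>t<n. M i (inv \<pi> (\<pi> t)) * e (\<pi> t))"
      using sum.reindex_bij_betw[OF permutes_imp_bij[OF p], of "\<lambda>j. M i (inv \<pi> j) * e j"]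
      by simp
    also have "\<dots> = (\<Sum>t<n. M i t * (e \<circ> \<pi>) t)"
      using p by (simp add: permutes_inverses)
    finally show ?thesis using True by (simp add: syndrome_def)
  qed (simp add: syndrome_def)
qed

lemma comp_perm_sphere:
  assumes p: "\<pi> permutes {..<n}" and e: "e \<in> sphere n w"
  shows "e \<circ> \<pi> \<in> sphere n w"
proof -
  have F: "e \<in> F3vecs n" "hweight n e = w" using e by (auto simp: sphere_def)
  have pin: "\<pi> i < n" if "i < n" for i using permutes_in_image[OF p] that by auto
  have piin: "inv \<pi> i < n" if "i < n" for i using permutes_in_image[OF permutes_inv[OF p]] that by auto
  have "e \<circ> \<pi> \<in> F3vecs n" unfolding F3vecs_def
  proof (intro CollectI conjI allI impI)
    fix i assume "i < n" then have "\<pi> i < n" using permutes_in_image[OF p] by auto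
    then show "(e \<circ> \<pi>) i \<in> {0,1,2}" using F(1) by (auto simp: F3vecs_def)
  next
    fix i assume i: "n \<le> i" then have "\<pi> i = i" using p by (auto simp: permutes_def)
    then show "(e \<circ> \<pi>) i = 0" using F(1) i by (auto simp: F3vecs_def)
  qed
  moreover have "{j. j < n \<and> e j \<noteq> 0} = \<pi> ` {i. i < n \<and> (e \<circ> \<pi>) i \<noteq> 0}"
  proof
    show "\<pi> ` {i. i < n \<and> (e \<circ> \<pi>) i \<noteq> 0} \<subseteq> {j. j < n \<and> e j \<noteq> 0}"
      using pin by auto
    show "{j. j < n \<and> e j \<noteq> 0} \<subseteq> \<pi> ` {i. i < n \<and> (e \<circ> \<pi>) i \<noteq> 0}"
    proof
      fix j assume "j \<in> {j. j < n \<and> e j \<noteq> 0}"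
      then show "j \<in> \<pi> ` {i. i < n \<and> (e \<circ> \<pi>) i \<noteq> 0}"
        using piin by (auto simp: permutes_inverses[OF p]
            intro!: image_eqI[where x="inv \<pi> j"])
    qed
  qed
  then have "hweight n (e \<circ> \<pi>) = hweight n e"
    unfolding hweight_def using p
    by (metis (no_types, lifting) card_image inj_on_subset permutes_inj subset_UNIV)
  ultimately show ?thesis using F by (simp add: sphere_def)
qed

lemma dist_perm:
  assumes p: "\<pi> permutes {..<n}"
  shows "dist_to_unif r n w (mmul r n n M (perm_mat n \<pi>)) = dist_to_unif r n w M"
proof -
  have pi: "inv \<pi> permutes {..<n}" using p by (simp add: permutes_inv)
  have c1: "f \<circ> inv \<pi> \<circ> \<pi> = f" "f \<circ> \<pi> \<circ> inv \<pi> = f" for f :: "nat \<Rightarrow> int"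
    by (auto simp: fun_eq_iff permutes_inverses[OF p])
  have "card {e \<in> sphere n w. syndrome r n M (e \<circ> \<pi>) = s} = card {e \<in> sphere n w. syndrome r n M e = s}" for s
  proof (rule bij_betw_same_card[where f="\<lambda>e. e \<circ> \<pi>"])
    show "bij_betw (\<lambda>e. e \<circ> \<pi>) {e \<in> sphere n w. syndrome r n M (e \<circ> \<pi>) = s} {e \<in> sphere n w. syndrome r n M e = s}"
      by (rule bij_betw_byWitness[where f'="\<lambda>e. e \<circ> inv \<pi>"])
         (use p pi comp_perm_sphere c1 in auto)
  qed
  then show ?thesis
    by (simp add: dist_to_unif_def syn_dist_def syndrome_perm[OF p])
qed


definition col :: "nat \<Rightarrow> nat \<Rightarrow> nat \<Rightarrow> (nat \<Rightarrow> nat \<Rightarrow> int) \<Rightarrow> nat" where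
  "col r n w H = card {p \<in> sphere n w \<times> sphere n w. syndrome r n H (fst p) = syndrome r n H (snd p)}"

lemma dist_CS:
  assumes w: "w \<le> n"
  defines "N \<equiv> real (card (sphere n w))"
  shows "0 \<le> 3 ^ r * real (col r n w H) / N^2 - 1"
    and "dist_to_unif r n w H \<le> 1/2 * sqrt (3 ^ r * real (col r n w H) / N^2 - 1)"
proof -
  let ?V = "F3vecs r" and ?S = "sphere n w"
  let ?D = "syn_dist r n w H" and ?c = "1 / 3 ^ r :: real"
  let ?f = "\<lambda>s. card {e \<in> ?S. syndrome r n H e = s}"
  have Npos: "N > 0" unfolding N_def card_sphere using w by simp
  have fV: "finite ?V" by (rule finite_F3vecs)
  have cV: "real (card ?V) = 3 ^ r" by (simp add: card_F3vecs)
  have sumf: "(\<Sum>s\<in>?V. ?f s) = card ?S"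
  proof -
    have "(\<Sum>s\<in>?V. \<Sum>e\<in>{e. e \<in> ?S \<and> syndrome r n H e = s}. (1::nat)) = (\<Sum>e\<in>?S. 1)"
      by (rule sum.group[OF finite_sphere fV]) (auto simp: syndrome_in)
    then show ?thesis by simp
  qed
  have sumD: "(\<Sum>s\<in>?V. ?D s) = 1"
  proof -
    have "(\<Sum>s\<in>?V. ?D s) = (\<Sum>s\<in>?V. real (?f s) / N)"
      unfolding syn_dist_def N_def by (rule refl)
    also have "\<dots> = (\<Sum>s\<in>?V. real (?f s)) / N" by (rule sum_divide_distrib[symmetric])
    also have "(\<Sum>s\<in>?V. real (?f s)) = real (\<Sum>s\<in>?V. ?f s)" by simp
    also have "\<dots> = N" unfolding N_def sumf ..
    finally show ?thesis using Npos by simp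
  qed
  have sumD2: "(\<Sum>s\<in>?V. (?D s)^2) = real (col r n w H) / N^2"
  proof -
    have "col r n w H = (\<Sum>s\<in>?V. (?f s)^2)"
      unfolding col_def by (rule card_pairs_fibers[OF finite_sphere fV]) (auto simp: syndrome_in)
    then have "real (col r n w H) = (\<Sum>s\<in>?V. (real (?f s))^2)" by simp
    then show ?thesis
      by (simp add: syn_dist_def N_def sum_divide_distrib power_divide)
  qed
  have sq: "(\<Sum>s\<in>?V. (?D s - ?c)^2) = (\<Sum>s\<in>?V. (?D s)^2) - ?c"
  proof -
    have "(\<Sum>s\<in>?V. (?D s - ?c)^2) = (\<Sum>s\<in>?V. (?D s)^2) - 2 * ?c * (\<Sum>s\<in>?V. ?D s) + real (card ?V) * ?c^2"
      by (simp add: power2_diff sum.distrib sum_subtractf sum_distrib_left)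
    also have "\<dots> = (\<Sum>s\<in>?V. (?D s)^2) - ?c"
      using cV sumD by (simp add: power2_eq_square)
    finally show ?thesis .
  qed
  have CS: "(\<Sum>s\<in>?V. \<bar>?D s - ?c\<bar> * 1)^2 \<le> (\<Sum>s\<in>?V. (\<bar>?D s - ?c\<bar>)^2) * (\<Sum>s\<in>?V. 1^2)"
    by (rule Cauchy_Schwarz_ineq_sum)
  then have CS2: "(\<Sum>s\<in>?V. \<bar>?D s - ?c\<bar>)^2 \<le> 3 ^ r * real (col r n w H) / N^2 - 1"
    using cV sq sumD2 by (simp add: mult.commute right_diff_distrib)
  then show "0 \<le> 3 ^ r * real (col r n w H) / N^2 - 1"
    by (meson order_trans zero_le_power2)
  have "(\<Sum>s\<in>?V. \<bar>?D s - ?c\<bar>) \<le> sqrt (3 ^ r * real (col r n w H) / N^2 - 1)"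
    using CS2 by (rule real_le_rsqrt)
  then show "dist_to_unif r n w H \<le> 1/2 * sqrt (3 ^ r * real (col r n w H) / N^2 - 1)"
    by (simp add: dist_to_unif_def)
qed

lemma sqrt_avg:
  fixes X :: "'a \<Rightarrow> real"
  assumes "finite I" "I \<noteq> {}" "\<And>i. i \<in> I \<Longrightarrow> 0 \<le> X i"
  shows "(\<Sum>i\<in>I. sqrt (X i)) / card I \<le> sqrt ((\<Sum>i\<in>I. X i) / card I)"
proof -
  have K: "real (card I) > 0" using assms by auto
  have "(\<Sum>i\<in>I. sqrt (X i) * 1)^2 \<le> (\<Sum>i\<in>I. (sqrt (X i))^2) * (\<Sum>i\<in>I. 1^2)"
    by (rule Cauchy_Schwarz_ineq_sum)
  also have "\<dots> = (\<Sum>i\<in>I. X i) * card I" using assms by simp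
  finally have "(\<Sum>i\<in>I. sqrt (X i)) \<le> sqrt ((\<Sum>i\<in>I. X i) * card I)"
    by (intro real_le_rsqrt) simp
  then have "(\<Sum>i\<in>I. sqrt (X i)) / card I \<le> sqrt ((\<Sum>i\<in>I. X i) * card I) / card I"
    using K by (simp add: divide_right_mono)
  also have "sqrt ((\<Sum>i\<in>I. X i) * card I) / card I = sqrt ((\<Sum>i\<in>I. X i) / card I)"
  proof -
    have "sqrt ((\<Sum>i\<in>I. X i) * card I) = sqrt ((\<Sum>i\<in>I. X i) / card I) * sqrt (card I * card I)"
    proof -
      have "(\<Sum>i\<in>I. X i) * card I = ((\<Sum>i\<in>I. X i) / card I) * (card I * card I)" using K by simp
      then show ?thesis by (metis real_sqrt_mult)
    qed
    also have "sqrt (card I * card I) = card I" by simp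
    finally show ?thesis using K by simp
  qed
  finally show ?thesis .
qed


lemma sum_upd_diff:
  fixes h y :: "nat \<Rightarrow> int" and k m :: nat
  assumes "k < m"
  shows "(\<Sum>j<m. (h(k := v)) j * y j) = (\<Sum>j<m. h j * y j) + (v - h k) * (y k :: int)"
proof -
  have rem: "(\<Sum>j<m. f j) = f k + (\<Sum>j\<in>{..<m}-{k}. f j)" for f :: "nat \<Rightarrow> int"
    using assms by (intro sum.remove) auto
  have "(\<Sum>j\<in>{..<m} - {k}. (h(k := v)) j * y j) = (\<Sum>j\<in>{..<m} - {k}. h j * y j)"
    by (rule sum.cong) auto
  then show ?thesis
    using rem[of "\<lambda>j. (h(k := v)) j * y j"] rem[of "\<lambda>j. h j * y j"]
    by (simp add: algebra_simps)
qed

lemma row_count: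
  assumes k: "k < m" and yk: "\<not> (3::int) dvd y k"
  shows "card {h \<in> F3vecs m. (3::int) dvd (\<Sum>j<m. h j * y j)} = 3 ^ (m - 1)"
proof -
  define u where "u = y k mod 3"
  have u: "u = 1 \<or> u = 2" using yk mod3_cases[of "y k"] by (auto simp: u_def dvd_eq_mod_eq_0)
  have uy: "(u * y k) mod 3 = 1"
  proof -
    have "(u * y k) mod 3 = (u * u) mod 3" by (simp add: u_def mod_mult_right_eq)
    then show ?thesis using u by auto
  qed
  define \<tau> where "\<tau> h = h(k := (h k + u) mod 3)" for h :: "nat \<Rightarrow> int"
  define A where "A t = {h \<in> F3vecs m. (\<Sum>j<m. h j * y j) mod 3 = t}" for t :: int
  have \<tau>in: "\<tau> h \<in> F3vecs m" if "h \<in> F3vecs m" for h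
    using that k mod3_cases by (auto simp: \<tau>_def F3vecs_def)
  have \<tau>sum: "(\<Sum>j<m. \<tau> h j * y j) mod 3 = ((\<Sum>j<m. h j * y j) mod 3 + 1) mod 3" for h
  proof -
    have "(\<Sum>j<m. \<tau> h j * y j) = (\<Sum>j<m. h j * y j) + ((h k + u) mod 3 - h k) * y k"
      unfolding \<tau>_def by (rule sum_upd_diff[OF k])
    also have "\<dots> mod 3 = ((\<Sum>j<m. h j * y j) + u * y k) mod 3"
    proof -
      have "((h k + u) mod 3 - h k) mod 3 = u mod 3"
        by (metis add_diff_cancel_left' mod_diff_left_eq)
      then have "(((h k + u) mod 3 - h k) * y k) mod 3 = (u * y k) mod 3"
        by (metis mod_mult_left_eq)
      then show ?thesis by (metis mod_add_right_eq)
    qed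
    also have "\<dots> = ((\<Sum>j<m. h j * y j) mod 3 + 1) mod 3"
      using uy by (metis mod_add_eq mod_mod_trivial)
    finally show ?thesis .
  qed
  have \<tau>inj: "inj_on \<tau> (F3vecs m)"
  proof (rule inj_onI)
    fix g h assume g: "g \<in> F3vecs m" and h: "h \<in> F3vecs m" and e: "\<tau> g = \<tau> h"
    then have "(g k + u) mod 3 = (h k + u) mod 3" unfolding \<tau>_def by (metis fun_upd_same)
    moreover have "g k \<in> {0,1,2}" "h k \<in> {0,1,2}" using g h k by (auto simp: F3vecs_def)
    ultimately have "g k = h k" using u by auto
    then show "g = h" using e unfolding \<tau>_def by (metis fun_upd_triv fun_upd_upd)
  qed
  have fA: "finite (A t)" for t unfolding A_def using finite_F3vecs by simp
  have step: "card (A t) \<le> card (A ((t + 1) mod 3))" if "t \<in> {0,1,2}" for t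
  proof (rule card_inj_on_le[OF inj_on_subset[OF \<tau>inj] _ fA])
    show "A t \<subseteq> F3vecs m" by (auto simp: A_def)
    show "\<tau> ` A t \<subseteq> A ((t + 1) mod 3)"
      using \<tau>sum \<tau>in by (auto simp: A_def mod_add_left_eq)
  qed
  have c01: "card (A 0) \<le> card (A 1)" using step[of 0] by simp
  have c12: "card (A 1) \<le> card (A 2)" using step[of 1] by simp
  have c20: "card (A 2) \<le> card (A 0)" using step[of 2] by simp
  have union: "F3vecs m = A 0 \<union> A 1 \<union> A 2"
    using mod3_cases by (auto simp: A_def)
  have "card (F3vecs m) = card (A 0) + card (A 1) + card (A 2)"
    unfolding union using fA
    by (subst card_Un_disjoint, auto simp: A_def card_Un_disjoint)+
  then have "3 ^ m = 3 * card (A 0)" using c01 c12 c20 by (simp add: card_F3vecs)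
  moreover have "m = Suc (m - 1)" using k by simp
  ultimately have "card (A 0) = 3 ^ (m - 1)" by (metis mult_left_cancel power_Suc zero_neq_numeral)
  moreover have "{h \<in> F3vecs m. (3::int) dvd (\<Sum>j<m. h j * y j)} = A 0"
    by (auto simp: A_def dvd_eq_mod_eq_0)
  ultimately show ?thesis by simp
qed

lemma F3mats_vset: "F3mats R m = vset {..<R} (\<lambda>_. F3vecs m) (\<lambda>_. 0)"
proof (rule set_eqI, rule iffI)
  fix H assume "H \<in> F3mats R m"
  then show "H \<in> vset {..<R} (\<lambda>_. F3vecs m) (\<lambda>_. 0)"
    by (auto simp: F3mats_def vset_def F3vecs_def fun_eq_iff)
next
  fix H assume A: "H \<in> vset {..<R} (\<lambda>_. F3vecs m) (\<lambda>_. 0)"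
  show "H \<in> F3mats R m" unfolding F3mats_def
  proof (intro CollectI allI conjI impI)
    fix i j assume "i < R \<and> j < m" then show "H i j \<in> {0,1,2}"
      using A by (auto simp: vset_def F3vecs_def)
  next
    fix i j assume "\<not> (i < R \<and> j < m)" then show "H i j = 0"
      using A by (cases "i < R") (auto simp: vset_def F3vecs_def)
  qed
qed

lemma finite_F3mats: "finite (F3mats R m)"
  unfolding F3mats_vset by (rule finite_vset) (auto simp: finite_F3vecs)

lemma card_F3mats: "card (F3mats R m) = 3 ^ (R * m)"
  unfolding F3mats_vset by (simp add: card_vset card_F3vecs) (metis power_mult mult.commute)

definition cnt :: "nat \<Rightarrow> nat \<Rightarrow> (nat \<Rightarrow> int) \<Rightarrow> nat" where
  "cnt R m y = card {H \<in> F3mats R m. \<forall>i<R. (3::int) dvd (\<Sum>j<m. H i j * y j)}"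

lemma cnt_rows: "cnt R m y = card {h \<in> F3vecs m. (3::int) dvd (\<Sum>j<m. h j * y j)} ^ R"
proof -
  have "{H \<in> F3mats R m. \<forall>i<R. (3::int) dvd (\<Sum>j<m. H i j * y j)}
      = vset {..<R} (\<lambda>_. {h \<in> F3vecs m. (3::int) dvd (\<Sum>j<m. h j * y j)}) (\<lambda>_. 0)"
    unfolding F3mats_vset by (auto simp: vset_def)
  then show ?thesis by (simp add: cnt_def card_vset)
qed

lemma cnt_zero: assumes "\<forall>j<m. (3::int) dvd y j" shows "cnt R m y = 3 ^ (R * m)"
proof -
  have "{h \<in> F3vecs m. (3::int) dvd (\<Sum>j<m. h j * y j)} = F3vecs m"
    using assms by (auto intro!: dvd_sum)
  then show ?thesis by (simp add: cnt_rows card_F3vecs) (metis power_mult mult.commute)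
qed

lemma cnt_nonzero: assumes "k < m" "\<not> (3::int) dvd y k"
  shows "real (cnt R m y) = 3 ^ (R * m) / 3 ^ R"
proof -
  have "cnt R m y = 3 ^ ((m - 1) * R)" using row_count[of k m y, OF assms] by (simp add: cnt_rows power_mult)
  moreover have "R * m = (m - 1) * R + R" using assms by (cases m) (auto simp: algebra_simps)
  ultimately show ?thesis by (simp add: power_add)
qed


lemma syn_eq_iff:
  "syndrome r n H e = syndrome r n H e' \<longleftrightarrow> (\<forall>i<r. (3::int) dvd (\<Sum>j<n. H i j * (e j - e' j)))"
proof -
  have "syndrome r n H e = syndrome r n H e' \<longleftrightarrow> (\<forall>i<r. (\<Sum>j<n. H i j * e j) mod 3 = (\<Sum>j<n. H i j * e' j) mod 3)"
    by (auto simp: syndrome_def fun_eq_iff)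
  also have "\<dots> \<longleftrightarrow> (\<forall>i<r. (3::int) dvd (\<Sum>j<n. H i j * (e j - e' j)))"
    by (simp add: mod_eq_dvd_iff sum_subtractf right_diff_distrib)
  finally show ?thesis .
qed

lemma dvd_sum_cong:
  fixes f g z :: "nat \<Rightarrow> int"
  assumes "\<And>j. j \<in> A \<Longrightarrow> f j mod 3 = g j mod 3"
  shows "(3 dvd (\<Sum>j\<in>A. f j * z j)) = (3 dvd (\<Sum>j\<in>A. g j * z j))"
proof -
  have "(\<Sum>j\<in>A. f j * z j) mod 3 = (\<Sum>j\<in>A. (f j mod 3) * z j) mod 3" by (rule sum_mod_mult[symmetric])
  also have "\<dots> = (\<Sum>j\<in>A. (g j mod 3) * z j) mod 3" using assms by (simp cong: sum.cong)
  also have "\<dots> = (\<Sum>j\<in>A. g j * z j) mod 3" by (rule sum_mod_mult)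
  finally show ?thesis by (simp add: dvd_eq_mod_eq_0)
qed

lemma sum_split2: "(\<Sum>j<a+b. f j) = (\<Sum>j<a. f j) + (\<Sum>j<b. f (a+j))"
  for f :: "nat \<Rightarrow> 'a::comm_monoid_add"
  by (induct b) (simp_all add: add.assoc)

lemma Hsk_U:
  fixes z :: "nat \<Rightarrow> int"
  assumes i: "i < m - kU"
  shows "(3 dvd (\<Sum>j<2*m. Hsk m kU kV a b c d HU HV i j * z j))
     \<longleftrightarrow> 3 dvd (\<Sum>j<m. HU i j * (d j * z j - b j * z (m + j)))"
proof -
  let ?g = "\<lambda>j. if j < m then HU i j * d j else - HU i (j - m) * b (j - m)"
  have "(3 dvd (\<Sum>j<2*m. Hsk m kU kV a b c d HU HV i j * z j)) = (3 dvd (\<Sum>j<2*m. ?g j * z j))"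
    by (rule dvd_sum_cong) (use i in \<open>simp add: Hsk_def\<close>)
  also have "(\<Sum>j<2*m. ?g j * z j) = (\<Sum>j<m. HU i j * (d j * z j - b j * z (m + j)))"
  proof -
    have "(\<Sum>j<2*m. ?g j * z j) = (\<Sum>j<m+m. ?g j * z j)" by (simp add: mult_2)
    also have "\<dots> = (\<Sum>j<m. ?g j * z j) + (\<Sum>j<m. ?g (m+j) * z (m+j))" by (rule sum_split2)
    also have "\<dots> = (\<Sum>j<m. HU i j * d j * z j) + (\<Sum>j<m. - HU i j * b j * z (m+j))" by simp
    also have "\<dots> = (\<Sum>j<m. HU i j * (d j * z j - b j * z (m + j)))"
      by (simp add: sum.distrib[symmetric] algebra_simps sum_subtractf[symmetric])
    finally show ?thesis .
  qed
  finally show ?thesis .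
qed

lemma Hsk_V:
  fixes z :: "nat \<Rightarrow> int"
  assumes i: "i < m - kV"
  shows "(3 dvd (\<Sum>j<2*m. Hsk m kU kV a b c d HU HV (m - kU + i) j * z j))
     \<longleftrightarrow> 3 dvd (\<Sum>j<m. HV i j * (- c j * z j + a j * z (m + j)))"
proof -
  let ?g = "\<lambda>j. if j < m then - HV i j * c j else HV i (j - m) * a (j - m)"
  have "(3 dvd (\<Sum>j<2*m. Hsk m kU kV a b c d HU HV (m - kU + i) j * z j)) = (3 dvd (\<Sum>j<2*m. ?g j * z j))"
    by (rule dvd_sum_cong) (use i in \<open>simp add: Hsk_def\<close>)
  also have "(\<Sum>j<2*m. ?g j * z j) = (\<Sum>j<m. HV i j * (- c j * z j + a j * z (m + j)))"
  proof -
    have "(\<Sum>j<2*m. ?g j * z j) = (\<Sum>j<m+m. ?g j * z j)" by (simp add: mult_2)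
    also have "\<dots> = (\<Sum>j<m. ?g j * z j) + (\<Sum>j<m. ?g (m+j) * z (m+j))" by (rule sum_split2)
    also have "\<dots> = (\<Sum>j<m. - HV i j * c j * z j) + (\<Sum>j<m. HV i j * a j * z (m+j))" by simp
    also have "\<dots> = (\<Sum>j<m. HV i j * (- c j * z j + a j * z (m + j)))"
      by (simp add: sum.distrib[symmetric] algebra_simps)
    finally show ?thesis .
  qed
  finally show ?thesis .
qed

definition yU :: "nat \<Rightarrow> (nat \<Rightarrow> int) \<Rightarrow> (nat \<Rightarrow> int) \<Rightarrow> (nat \<Rightarrow> int) \<Rightarrow> (nat \<Rightarrow> int) \<Rightarrow> nat \<Rightarrow> int" where
  "yU m b d e e' = (\<lambda>j. d j * (e j - e' j) - b j * (e (m + j) - e' (m + j)))"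

definition yV :: "nat \<Rightarrow> (nat \<Rightarrow> int) \<Rightarrow> (nat \<Rightarrow> int) \<Rightarrow> (nat \<Rightarrow> int) \<Rightarrow> (nat \<Rightarrow> int) \<Rightarrow> nat \<Rightarrow> int" where
  "yV m a c e e' = (\<lambda>j. - c j * (e j - e' j) + a j * (e (m + j) - e' (m + j)))"

lemma syn_Hsk_iff:
  assumes "kU \<le> m"
  shows "syndrome ((m - kU) + (m - kV)) (2*m) (Hsk m kU kV a b c d HU HV) e
       = syndrome ((m - kU) + (m - kV)) (2*m) (Hsk m kU kV a b c d HU HV) e'
     \<longleftrightarrow> (\<forall>i<m - kU. (3::int) dvd (\<Sum>j<m. HU i j * yU m b d e e' j))
       \<and> (\<forall>i<m - kV. (3::int) dvd (\<Sum>j<m. HV i j * yV m a c e e' j))"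
proof -
  let ?H = "Hsk m kU kV a b c d HU HV"
  let ?P = "\<lambda>i. (3::int) dvd (\<Sum>j<2*m. ?H i j * (e j - e' j))"
  have split: "(\<forall>i<(m - kU) + (m - kV). ?P i) \<longleftrightarrow> (\<forall>i<m - kU. ?P i) \<and> (\<forall>i<m - kV. ?P (m - kU + i))"
  proof safe
    fix i assume A: "\<forall>i<m - kU. ?P i" "\<forall>i<m - kV. ?P (m - kU + i)" and i: "i < m - kU + (m - kV)"
    show "?P i"
    proof (cases "i < m - kU")
      case True then show ?thesis using A by simp
    next
      case False
      then have "i = m - kU + (i - (m - kU))" "i - (m - kU) < m - kV" using i by auto
      then show ?thesis using A(2) by metis
    qed
  qed auto
  have U: "?P i \<longleftrightarrow> (3::int) dvd (\<Sum>j<m. HU i j * yU m b d e e' j)" if "i < m - kU" for i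
    using Hsk_U[OF that, of kV a b c d HU HV "\<lambda>j. e j - e' j"] by (simp add: yU_def)
  have V: "?P (m - kU + i) \<longleftrightarrow> (3::int) dvd (\<Sum>j<m. HV i j * yV m a c e e' j)" if "i < m - kV" for i
    using Hsk_V[OF that, of kU a b c d HU HV "\<lambda>j. e j - e' j"] by (simp add: yV_def)
  show ?thesis unfolding syn_eq_iff split using U V by auto
qed

lemma sum_indicator_card: "finite A \<Longrightarrow> (\<Sum>x\<in>A. if P x then 1 else 0) = card {x\<in>A. P x}"
  by (simp add: sum.If_cases Int_def)

lemma sum_col:
  fixes w m :: nat
  assumes "kU \<le> m"
  defines "S \<equiv> sphere (2*m) w"
  shows "(\<Sum>HU\<in>F3mats (m - kU) m. \<Sum>HV\<in>F3mats (m - kV) m.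
            col ((m - kU) + (m - kV)) (2*m) w (Hsk m kU kV a b c d HU HV))
       = (\<Sum>p\<in>S \<times> S. cnt (m - kU) m (yU m b d (fst p) (snd p)) * cnt (m - kV) m (yV m a c (fst p) (snd p)))"
proof -
  let ?MU = "F3mats (m - kU) m" and ?MV = "F3mats (m - kV) m"
  let ?QU = "\<lambda>HU p. \<forall>i<m - kU. (3::int) dvd (\<Sum>j<m. HU i j * yU m b d (fst p) (snd p) j)"
  let ?QV = "\<lambda>HV p. \<forall>i<m - kV. (3::int) dvd (\<Sum>j<m. HV i j * yV m a c (fst p) (snd p) j)"
  have fS: "finite (S \<times> S)" unfolding S_def using finite_sphere by simp
  have colx: "col ((m - kU) + (m - kV)) (2*m) w (Hsk m kU kV a b c d HU HV)
      = (\<Sum>p\<in>S \<times> S. (if ?QU HU p then 1 else 0) * (if ?QV HV p then 1 else (0::nat)))" for HU HV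
  proof -
    have "col ((m - kU) + (m - kV)) (2*m) w (Hsk m kU kV a b c d HU HV) = card {p \<in> S \<times> S. ?QU HU p \<and> ?QV HV p}"
      unfolding col_def S_def using syn_Hsk_iff[OF assms(1)] by presburger
    also have "\<dots> = (\<Sum>p\<in>S \<times> S. if ?QU HU p \<and> ?QV HV p then 1 else 0)"
      by (rule sum_indicator_card[OF fS, symmetric])
    also have "\<dots> = (\<Sum>p\<in>S \<times> S. (if ?QU HU p then 1 else 0) * (if ?QV HV p then 1 else (0::nat)))"
      by (rule sum.cong) auto
    finally show ?thesis .
  qed
  have "(\<Sum>HU\<in>?MU. \<Sum>HV\<in>?MV. col ((m - kU) + (m - kV)) (2*m) w (Hsk m kU kV a b c d HU HV))
      = (\<Sum>HU\<in>?MU. \<Sum>HV\<in>?MV. \<Sum>p\<in>S \<times> S. (if ?QU HU p then 1 else 0) * (if ?QV HV p then 1 else (0::nat)))"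
    by (simp add: colx)
  also have "\<dots> = (\<Sum>HU\<in>?MU. \<Sum>p\<in>S \<times> S. \<Sum>HV\<in>?MV. (if ?QU HU p then 1 else 0) * (if ?QV HV p then 1 else (0::nat)))"
    by (rule sum.cong[OF refl], rule sum.swap)
  also have "\<dots> = (\<Sum>p\<in>S \<times> S. \<Sum>HU\<in>?MU. \<Sum>HV\<in>?MV. (if ?QU HU p then 1 else 0) * (if ?QV HV p then 1 else (0::nat)))"
    by (rule sum.swap)
  also have "\<dots> = (\<Sum>p\<in>S \<times> S. (\<Sum>HU\<in>?MU. if ?QU HU p then 1 else 0) * (\<Sum>HV\<in>?MV. if ?QV HV p then 1 else (0::nat)))"
    by (simp add: sum_product)
  also have "\<dots> = (\<Sum>p\<in>S \<times> S. cnt (m - kU) m (yU m b d (fst p) (snd p)) * cnt (m - kV) m (yV m a c (fst p) (snd p)))"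
    by (simp add: sum_indicator_card finite_F3mats cnt_def)
  finally show ?thesis .
qed


lemma dvd3_det: "(3::int) dvd (D * x) \<Longrightarrow> D mod 3 = 1 \<Longrightarrow> 3 dvd x"
  by (metis dvd_eq_mod_eq_0 mod_mult_left_eq mult_1)

lemma dvd3_eq: "(x::int) \<in> {0,1,2} \<Longrightarrow> y \<in> {0,1,2} \<Longrightarrow> 3 dvd (x - y) \<Longrightarrow> x = y"
  by auto

lemma yUV_zero_eq:
  assumes e: "e \<in> F3vecs (2*m)" and e': "e' \<in> F3vecs (2*m)"
    and det: "\<forall>j<m. (a j * d j - b j * c j) mod 3 = 1"
    and zU: "\<forall>j<m. (3::int) dvd yU m b d e e' j" and zV: "\<forall>j<m. (3::int) dvd yV m a c e e' j"
  shows "e = e'"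
proof (rule ext)
  fix i
  have x1: "3 dvd (e j - e' j)" and x2: "3 dvd (e (m + j) - e' (m + j))" if j: "j < m" for j
  proof -
    let ?x = "e j - e' j" and ?y = "e (m + j) - e' (m + j)"
    have u: "3 dvd (d j * ?x - b j * ?y)" using zU j by (simp add: yU_def)
    have v: "3 dvd (- c j * ?x + a j * ?y)" using zV j by (simp add: yV_def)
    have "3 dvd (a j * (d j * ?x - b j * ?y) + b j * (- c j * ?x + a j * ?y))"
      using u v by simp
    moreover have "a j * (d j * ?x - b j * ?y) + b j * (- c j * ?x + a j * ?y) = (a j * d j - b j * c j) * ?x"
      by (simp add: algebra_simps)
    ultimately show "3 dvd ?x" using det j dvd3_det by metis
    have "3 dvd (c j * (d j * ?x - b j * ?y) + d j * (- c j * ?x + a j * ?y))"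
      using u v by simp
    moreover have "c j * (d j * ?x - b j * ?y) + d j * (- c j * ?x + a j * ?y) = (a j * d j - b j * c j) * ?y"
      by (simp add: algebra_simps)
    ultimately show "3 dvd ?y" using det j dvd3_det by metis
  qed
  consider "i < m" | "m \<le> i" "i < 2*m" | "2*m \<le> i" by linarith
  then show "e i = e' i"
  proof cases
    case 1
    then show ?thesis using x1[OF 1] e e' by (intro dvd3_eq) (auto simp: F3vecs_def)
  next
    case 2
    then have "i = m + (i - m)" "i - m < m" by auto
    then show ?thesis using x2[of "i - m"] e e' 2 by (intro dvd3_eq) (auto simp: F3vecs_def)
  next
    case 3
    then show ?thesis using e e' by (auto simp: F3vecs_def)
  qed
qed


lemma prod_monom1: "finite I \<Longrightarrow> (\<Prod>i\<in>I. monom (1::nat) (f i)) = monom 1 (\<Sum>i\<in>I. f i)"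
  by (induct I rule: finite_induct) (simp_all add: mult_monom monom_0 one_pCons)

lemma card_fixed_sphere:
  fixes I :: "nat set" and u :: "nat \<Rightarrow> int"
  assumes I: "I \<subseteq> {..<n}" and u: "u \<in> vset I (\<lambda>_. {0,1,2}) 0"
  defines "k \<equiv> (\<Sum>i\<in>I. nz (u i))"
  shows "card {e \<in> sphere n w. (\<lambda>i. if i \<in> I then e i else 0) = u}
       = (if k \<le> w then ((n - card I) choose (w - k)) * 2 ^ (w - k) else 0)"
proof -
  define B where "B i = (if i \<in> I then {u i} else {0,1,2::int})" for i
  have fI: "finite I" using I finite_subset by blast
  have uI: "u i \<in> {0,1,2}" if "i \<in> I" for i using u that by (auto simp: vset_def)
  have u0: "u i = 0" if "i \<notin> I" for i using u that by (auto simp: vset_def)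
  have seteq: "{e \<in> sphere n w. (\<lambda>i. if i \<in> I then e i else 0) = u}
      = {e \<in> vset {..<n} B 0. (\<Sum>i<n. nz (e i)) = w}"
  proof (rule set_eqI, rule iffI)
    fix e assume "e \<in> {e \<in> sphere n w. (\<lambda>i. if i \<in> I then e i else 0) = u}"
    then have e: "e \<in> vset {..<n} (\<lambda>_. {0,1,2}) 0" "(\<Sum>i<n. nz (e i)) = w"
      and eu: "\<And>i. i \<in> I \<Longrightarrow> e i = u i"
      by (auto simp: sphere_vset fun_eq_iff) metis
    then show "e \<in> {e \<in> vset {..<n} B 0. (\<Sum>i<n. nz (e i)) = w}"
      by (auto simp: vset_def B_def)
  next
    fix e assume "e \<in> {e \<in> vset {..<n} B 0. (\<Sum>i<n. nz (e i)) = w}"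
    then have e: "e \<in> vset {..<n} B 0" "(\<Sum>i<n. nz (e i)) = w" by auto
    have "e \<in> vset {..<n} (\<lambda>_. {0,1,2}) 0" unfolding vset_def
    proof (intro CollectI conjI ballI allI impI)
      fix i assume i: "i \<in> {..<n}"
      have eB: "e i \<in> B i" using e(1) i by (simp add: vset_def)
      show "e i \<in> {0,1,2}"
      proof (cases "i \<in> I")
        case True
        then have "e i = u i" using eB by (simp add: B_def)
        then show ?thesis using uI True by simp
      next
        case False then show ?thesis using eB by (simp add: B_def)
      qed
    next
      fix i assume "i \<notin> {..<n}" then show "e i = 0" using e(1) by (auto simp: vset_def)
    qed
    moreover have "(\<lambda>i. if i \<in> I then e i else 0) = u"
    proof (rule ext)
      fix i show "(if i \<in> I then e i else 0) = u i"
      proof (cases "i \<in> I")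
        case True
        then have "i \<in> {..<n}" using I by auto
        then have "e i \<in> B i" using e(1) by (simp add: vset_def)
        then show ?thesis using True by (simp add: B_def)
      qed (simp add: u0)
    qed
    ultimately show "e \<in> {e \<in> sphere n w. (\<lambda>i. if i \<in> I then e i else 0) = u}"
      using e(2) by (simp add: sphere_vset)
  qed
  have "card {e \<in> vset {..<n} B 0. (\<Sum>i<n. nz (e i)) = w}
      = coeff (\<Prod>i<n. \<Sum>x\<in>B i. monom (1::nat) (nz x)) w"
    by (rule card_vset_weight) (auto simp: B_def)
  also have "(\<Prod>i<n. \<Sum>x\<in>B i. monom (1::nat) (nz x))
      = (\<Prod>i<n. if i \<in> I then monom 1 (nz (u i)) else [:1, 2:])"
    by (rule prod.cong) (use poly012 in \<open>simp_all add: B_def\<close>)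
  also have "\<dots> = (\<Prod>i\<in>{..<n} \<inter> {i. i \<in> I}. monom 1 (nz (u i))) * (\<Prod>i\<in>{..<n} \<inter> - {i. i \<in> I}. [:1, 2:])"
    by (rule prod.If_cases) simp
  also have "{..<n} \<inter> {i. i \<in> I} = I" using I by auto
  also have "(\<Prod>i\<in>{..<n} \<inter> - {i. i \<in> I}. [:1, 2:]) = [:1, 2::nat:] ^ (n - card I)"
  proof -
    have "{..<n} \<inter> - {i. i \<in> I} = {..<n} - I" by auto
    moreover have "card ({..<n} - I) = n - card I" using I fI by (simp add: card_Diff_subset)
    ultimately show ?thesis by simp
  qed
  also have "(\<Prod>i\<in>I. monom (1::nat) (nz (u i))) = monom 1 k" unfolding k_def using fI by (rule prod_monom1)
  finally have "card {e \<in> vset {..<n} B 0. (\<Sum>i<n. nz (e i)) = w} = coeff (monom 1 k * [:1, 2:] ^ (n - card I)) w" .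
  also have "\<dots> = (if k \<le> w then ((n - card I) choose (w - k)) * 2 ^ (w - k) else 0)"
    unfolding cm1 coeff_lin_pow by auto
  finally show ?thesis using seteq by simp
qed


lemma dvd3_unit: "D \<in> {1,2} \<Longrightarrow> (3::int) dvd D * x \<Longrightarrow> 3 dvd x"
  by auto presburger

lemma T3:
  fixes m w :: nat and a b c d :: "nat \<Rightarrow> int"
  assumes w: "w \<le> 2*m" and rng: "\<forall>i<m. a i \<in> {0,1,2} \<and> b i \<in> {0,1,2} \<and> c i \<in> {0,1,2} \<and> d i \<in> {0,1,2}"
    and det: "\<forall>i<m. (a i * d i - b i * c i) mod 3 = 1"
  shows "real (card {p \<in> sphere (2*m) w \<times> sphere (2*m) w. \<forall>j<m. (3::int) dvd yU m b d (fst p) (snd p) j})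
          / real (card (sphere (2*m) w))^2
        \<le> (\<Sum>j=0..nI m b d. real (nI m b d choose j) * (if j \<le> w then real ((2*m - nI m b d) choose (w - j)) else 0)^2
              / (real ((2*m) choose w) ^ 2 * 2 ^ j))"
proof -
  define S where "S = sphere (2*m) w"
  define Jt where "Jt = {i. i < m \<and> (b i * d i) mod 3 = 0}"
  define nI0 where "nI0 = nI m b d"
  have nI0: "nI0 = card Jt" by (simp add: nI0_def nI_def Jt_def)
  define \<iota> where "\<iota> j = (if b j = 0 then j else m + j)" for j
  define I where "I = \<iota> ` Jt"
  have inj: "inj_on \<iota> Jt" by (auto simp: inj_on_def \<iota>_def Jt_def split: if_splits)
  have cI: "card I = nI0" unfolding I_def nI0 using inj by (rule card_image)
  have Isub: "I \<subseteq> {..<2*m}" by (auto simp: I_def \<iota>_def Jt_def)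
  have fI: "finite I" using Isub finite_subset by blast
  define g where "g e = (\<lambda>i. if i \<in> I then e i else (0::int))" for e :: "nat \<Rightarrow> int"
  define VI where "VI = vset I (\<lambda>_. {0,1,2::int}) 0"
  define h where "h k = (if k \<le> w then ((2*m - nI0) choose (w - k)) * 2 ^ (w - k) else (0::nat))" for k
  define wt where "wt u = (\<Sum>i\<in>I. nz (u i))" for u :: "nat \<Rightarrow> int"
  have fS: "finite S" by (simp add: S_def finite_sphere)
  have fVI: "finite VI" unfolding VI_def using fI by (intro finite_vset) auto
  have blk: "e (\<iota> j) = e' (\<iota> j)"
    if e: "e \<in> F3vecs (2*m)" and e': "e' \<in> F3vecs (2*m)" and j: "j \<in> Jt"
      and z: "(3::int) dvd yU m b d e e' j" for e e' j
  proof -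
    have jm: "j < m" using j by (simp add: Jt_def)
    have r: "a j \<in> {0,1,2}" "b j \<in> {0,1,2}" "c j \<in> {0,1,2}" "d j \<in> {0,1,2}" using rng jm by auto
    have bd: "(b j * d j) mod 3 = 0" using j by (simp add: Jt_def)
    have dt: "(a j * d j - b j * c j) mod 3 = 1" using det jm by auto
    have ein: "e i \<in> {0,1,2}" "e' i \<in> {0,1,2}" if "i < 2*m" for i
      using e e' that by (auto simp: F3vecs_def)
    show ?thesis
    proof (cases "b j = 0")
      case True
      then have "d j \<in> {1,2}" using dt r by auto
      moreover have "3 dvd (d j * (e j - e' j))" using z True by (simp add: yU_def)
      ultimately have "3 dvd (e j - e' j)" by (rule dvd3_unit)
      then have "e j = e' j" using ein[of j] jm by (intro dvd3_eq) auto
      then show ?thesis using True by (simp add: \<iota>_def)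
    next
      case False
      then have b12: "b j \<in> {1,2}" and d0: "d j = 0" using r bd by auto
      have "3 dvd (- (b j * (e (m + j) - e' (m + j))))" using z d0 by (simp add: yU_def)
      then have "3 dvd (b j * (e (m + j) - e' (m + j)))" by simp
      with b12 have "3 dvd (e (m + j) - e' (m + j))" by (rule dvd3_unit)
      then have "e (m + j) = e' (m + j)" using ein[of "m + j"] jm by (intro dvd3_eq) auto
      then show ?thesis using False by (simp add: \<iota>_def)
    qed
  qed
  have sub: "{p \<in> S \<times> S. \<forall>j<m. (3::int) dvd yU m b d (fst p) (snd p) j} \<subseteq> {p \<in> S \<times> S. g (fst p) = g (snd p)}"
  proof safe
    fix e e' assume eS: "e \<in> S" and e'S: "e' \<in> S" and z: "\<forall>j<m. (3::int) dvd yU m b d (fst (e, e')) (snd (e, e')) j"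
    have F: "e \<in> F3vecs (2*m)" "e' \<in> F3vecs (2*m)" using eS e'S by (auto simp: S_def sphere_def)
    show "g (fst (e, e')) = g (snd (e, e'))"
    proof (rule ext)
      fix i show "g (fst (e, e')) i = g (snd (e, e')) i"
      proof (cases "i \<in> I")
        case True
        then obtain j where j: "j \<in> Jt" "i = \<iota> j" by (auto simp: I_def)
        then have "j < m" by (simp add: Jt_def)
        then show ?thesis using blk[OF F j(1)] z j True by (simp add: g_def)
      qed (simp add: g_def)
    qed
  qed
  have gin: "g ` S \<subseteq> VI"
  proof
    fix u assume "u \<in> g ` S"
    then obtain e where e: "e \<in> S" "u = g e" by auto
    then show "u \<in> VI" using Isub by (auto simp: S_def sphere_def F3vecs_def VI_def vset_def g_def)
  qed
  have "card {p \<in> S \<times> S. \<forall>j<m. (3::int) dvd yU m b d (fst p) (snd p) j} \<le> card {p \<in> S \<times> S. g (fst p) = g (snd p)}"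
    by (rule card_mono) (use fS sub in auto)
  also have "\<dots> = (\<Sum>u\<in>VI. card {e \<in> S. g e = u} ^ 2)"
    by (rule card_pairs_fibers[OF fS fVI gin])
  also have "\<dots> = (\<Sum>u\<in>VI. h (wt u) ^ 2)"
  proof (rule sum.cong[OF refl])
    fix u assume u: "u \<in> VI"
    have "card {e \<in> S. g e = u} = h (wt u)"
      using card_fixed_sphere[OF Isub, of u w] u cI
      by (simp add: S_def g_def VI_def h_def wt_def)
    then show "card {e \<in> S. g e = u} ^ 2 = h (wt u) ^ 2" by simp
  qed
  also have "\<dots> = (\<Sum>j\<in>{0..nI0}. \<Sum>u\<in>{u. u \<in> VI \<and> wt u = j}. h (wt u) ^ 2)"
  proof (rule sum.group[symmetric, OF fVI])
    show "finite {0..nI0}" by simp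
    show "wt ` VI \<subseteq> {0..nI0}"
    proof
      fix k assume "k \<in> wt ` VI"
      then obtain u where "k = wt u" by auto
      moreover have "wt u \<le> (\<Sum>i\<in>I. 1)" unfolding wt_def by (rule sum_mono) (simp add: nz_def)
      ultimately show "k \<in> {0..nI0}" using cI by simp
    qed
  qed
  also have "\<dots> = (\<Sum>j\<in>{0..nI0}. (nI0 choose j) * 2 ^ j * h j ^ 2)"
  proof (rule sum.cong[OF refl])
    fix j
    have "(\<Sum>u\<in>{u. u \<in> VI \<and> wt u = j}. h (wt u) ^ 2) = card {u \<in> VI. wt u = j} * h j ^ 2" by simp
    also have "card {u \<in> VI. wt u = j} = (nI0 choose j) * 2 ^ j"
      unfolding VI_def wt_def using card_weight_012[OF fI, of j] cI by simp
    finally show "(\<Sum>u\<in>{u. u \<in> VI \<and> wt u = j}. h (wt u) ^ 2) = (nI0 choose j) * 2 ^ j * h j ^ 2" .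
  qed
  finally have cnt0: "card {p \<in> S \<times> S. \<forall>j<m. (3::int) dvd yU m b d (fst p) (snd p) j}
      \<le> (\<Sum>j\<in>{0..nI0}. (nI0 choose j) * 2 ^ j * h j ^ 2)" .
  have cnt: "real (card {p \<in> S \<times> S. \<forall>j<m. (3::int) dvd yU m b d (fst p) (snd p) j})
      \<le> (\<Sum>j\<in>{0..nI0}. real (nI0 choose j) * 2 ^ j * real (h j) ^ 2)"
  proof -
    have "real (card {p \<in> S \<times> S. \<forall>j<m. (3::int) dvd yU m b d (fst p) (snd p) j})
      \<le> real (\<Sum>j\<in>{0..nI0}. (nI0 choose j) * 2 ^ j * h j ^ 2)"
      using cnt0 by (simp only: of_nat_le_iff)
    also have "\<dots> = (\<Sum>j\<in>{0..nI0}. real (nI0 choose j) * 2 ^ j * real (h j) ^ 2)" by simp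
    finally show ?thesis .
  qed
  have N: "real (card S) = real ((2*m) choose w) * 2 ^ w" by (simp add: S_def card_sphere)
  have Cpos: "real ((2*m) choose w) > 0" using w by simp
  have trm: "real (nI0 choose j) * 2 ^ j * real (h j) ^ 2 / real (card S) ^ 2
      = real (nI0 choose j) * (if j \<le> w then real ((2*m - nI0) choose (w - j)) else 0)^2
              / (real ((2*m) choose w) ^ 2 * 2 ^ j)" for j
  proof (cases "j \<le> w")
    case True
    have p: "(2::real) ^ w = 2 ^ j * 2 ^ (w - j)" using True by (simp add: power_add[symmetric])
    show ?thesis using True Cpos unfolding N h_def p by (simp add: field_simps power2_eq_square)
  next
    case False then show ?thesis by (simp add: h_def)
  qed
  have "real (card {p \<in> S \<times> S. \<forall>j<m. (3::int) dvd yU m b d (fst p) (snd p) j}) / real (card S)^2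
      \<le> (\<Sum>j\<in>{0..nI0}. real (nI0 choose j) * 2 ^ j * real (h j) ^ 2) / real (card S)^2"
    using cnt by (simp add: divide_right_mono)
  also have "\<dots> = (\<Sum>j\<in>{0..nI0}. real (nI0 choose j) * (if j \<le> w then real ((2*m - nI0) choose (w - j)) else 0)^2
              / (real ((2*m) choose w) ^ 2 * 2 ^ j))"
    by (simp add: sum_divide_distrib trm)
  finally have X: "real (card {p \<in> S \<times> S. \<forall>j<m. (3::int) dvd yU m b d (fst p) (snd p) j}) / real (card S)^2
      \<le> (\<Sum>j\<in>{0..nI0}. real (nI0 choose j) * (if j \<le> w then real ((2*m - nI0) choose (w - j)) else 0)^2
              / (real ((2*m) choose w) ^ 2 * 2 ^ j))" .
  show ?thesis using X unfolding S_def nI0_def .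
qed


definition A0 :: "nat poly" where "A0 = monom 2 2 + monom 1 0"
definition A1 :: "nat poly" where "A1 = monom 2 1 + monom 1 2"

lemma blockpoly:
  fixes \<alpha> \<gamma> t :: int
  assumes "\<alpha> \<in> {1,2}" "\<gamma> \<in> {1,2}" "t \<in> {0,1,2}"
  shows "(\<Sum>xy\<in>{xy \<in> {0,1,2::int} \<times> {0,1,2::int}. (- \<gamma> * fst xy + \<alpha> * snd xy) mod 3 = t}.
            monom (1::nat) (nz (fst xy) + nz (snd xy))) = (if t = 0 then A0 else A1)"
proof -
  let ?P = "\<lambda>xy::int\<times>int. (- \<gamma> * fst xy + \<alpha> * snd xy) mod 3 = t"
  let ?f = "\<lambda>xy::int\<times>int. monom (1::nat) (nz (fst xy) + nz (snd xy))"
  have e: "{0,1,2::int} \<times> {0,1,2::int} = {(0,0),(0,1),(0,2),(1,0),(1,1),(1,2),(2,0),(2,1),(2,2)}" by auto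
  have "(\<Sum>xy\<in>{xy \<in> {0,1,2::int} \<times> {0,1,2::int}. ?P xy}. ?f xy)
      = (\<Sum>xy\<in>{(0,0),(0,1),(0,2),(1,0),(1,1),(1,2),(2,0),(2,1),(2,2)}. if ?P xy then ?f xy else 0)"
    unfolding e by (rule sum.inter_filter) simp
  also have "\<dots> = (if t = 0 then A0 else A1)"
  proof -
    from assms have "\<alpha> = 1 \<or> \<alpha> = 2" "\<gamma> = 1 \<or> \<gamma> = 2" "t = 0 \<or> t = 1 \<or> t = 2" by auto
    then show ?thesis
      by (elim disjE) (simp_all add: nz_def A0_def A1_def poly_eq_iff coeff_monom)
  qed
  finally show ?thesis .
qed

lemma binom_monom:
  "(monom (x::nat) d1 + monom y d2) ^ k = (\<Sum>p\<le>k. monom ((k choose p) * x ^ p * y ^ (k - p)) (d1 * p + d2 * (k - p)))"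
  unfolding binomial_ring
  by (rule sum.cong) (simp_all add: monom_power mult_monom of_nat_monom ac_simps)

definition G :: "nat \<Rightarrow> nat \<Rightarrow> nat \<Rightarrow> nat" where
  "G m w k = coeff (A1 ^ k * A0 ^ (m - k)) w"

lemma G_sum: "G m w k = (\<Sum>p\<le>k. \<Sum>s\<le>m - k.
     if p + 2 * (k - p) + 2 * s = w then (k choose p) * 2 ^ p * ((m - k choose s) * 2 ^ s) else 0)"
proof -
  have a1: "A1 ^ k = (\<Sum>p\<le>k. monom ((k choose p) * 2 ^ p) (p + 2 * (k - p)))"
    unfolding A1_def binom_monom by simp
  have a0: "A0 ^ (m - k) = (\<Sum>s\<le>m - k. monom ((m - k choose s) * 2 ^ s) (2 * s))"
    unfolding A0_def binom_monom by simp
  show ?thesis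
    unfolding G_def a1 a0 sum_product
    by (simp add: coeff_sum mult_monom coeff_monom)
qed

lemma G_closed:
  "G m w k = (\<Sum>p\<le>k. if even (w + p) \<and> k \<le> (w + p) div 2
      then (k choose p) * 2 ^ p * ((m - k choose ((w + p) div 2 - k)) * 2 ^ ((w + p) div 2 - k)) else 0)"
  unfolding G_sum
proof (rule sum.cong[OF refl])
  fix p assume "p \<in> {..k}"
  then have pk: "p \<le> k" by simp
  let ?h = "(w + p) div 2"
  let ?F = "\<lambda>s. (k choose p) * 2 ^ p * ((m - k choose s) * 2 ^ s)"
  have cond: "p + 2 * (k - p) + 2 * s = w \<longleftrightarrow> (even (w + p) \<and> k \<le> ?h \<and> s = ?h - k)" for s
  proof
    assume A: "p + 2 * (k - p) + 2 * s = w"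
    then have "w + p = 2 * (k + s)" using pk by arith
    then show "even (w + p) \<and> k \<le> ?h \<and> s = ?h - k" by simp
  next
    assume B: "even (w + p) \<and> k \<le> ?h \<and> s = ?h - k"
    then have "w + p = 2 * ?h" by simp
    then show "p + 2 * (k - p) + 2 * s = w" using B pk by arith
  qed
  have "(\<Sum>s\<le>m - k. if p + 2 * (k - p) + 2 * s = w then ?F s else 0)
      = (\<Sum>s\<le>m - k. if s = ?h - k then (if even (w + p) \<and> k \<le> ?h then ?F s else 0) else 0)"
    by (rule sum.cong[OF refl]) (simp add: cond)
  also have "\<dots> = (if ?h - k \<le> m - k then (if even (w + p) \<and> k \<le> ?h then ?F (?h - k) else 0) else 0)"
    by (simp add: sum.delta')
  also have "\<dots> = (if even (w + p) \<and> k \<le> ?h then ?F (?h - k) else 0)"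
    by auto
  finally show "(\<Sum>s\<le>m - k. if p + 2 * (k - p) + 2 * s = w then ?F s else 0)
      = (if even (w + p) \<and> k \<le> ?h then ?F (?h - k) else 0)" .
qed

lemma powr_identity:
  assumes "2 * h = w + (p::nat)"
  shows "(2::real) powr (3 * real p / 2) / 2 powr (real w / 2) = 2 ^ (p + h) / 2 ^ w"
proof -
  have "real (2 * h) = real (w + p)" using assms by (simp only:)
  then have hr: "real h = (real w + real p) / 2" by simp
  have "(2::real) ^ (p + h) = 2 powr (real (p + h))" by (rule powr_realpow[symmetric]) simp
  moreover have "(2::real) ^ w = 2 powr (real w)" by (rule powr_realpow[symmetric]) simp
  ultimately have "(2::real) ^ (p + h) / 2 ^ w = 2 powr (real (p + h)) / 2 powr (real w)" by simp
  also have "\<dots> = 2 powr (real (p + h) - real w)" by (simp add: powr_diff)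
  also have "real (p + h) - real w = 3 * real p / 2 - real w / 2" using hr by simp
  also have "(2::real) powr (3 * real p / 2 - real w / 2) = 2 powr (3 * real p / 2) / 2 powr (real w / 2)"
    by (simp add: powr_diff)
  finally show ?thesis by simp
qed

lemma q1_G:
  assumes "k \<le> m"
  shows "q1 (2*m) w k = real (m choose k) * 2 ^ k * real (G m w k) / (real ((2*m) choose w) * 2 ^ w)"
proof -
  let ?h = "\<lambda>p. (w + p) div 2"
  let ?T = "\<lambda>p. real (k choose p) * (if k \<le> ?h p then real ((m - k) choose (?h p - k)) else 0) * 2 powr (3 * real p / 2)"
  have set: "{p. p \<le> k \<and> even (w + p)} = {p \<in> {..k}. even (w + p)}" by auto
  have md: "(2*m) div 2 = m" by simp
  have "q1 (2*m) w k = real (m choose k) / (real ((2*m) choose w) * 2 powr (real w / 2)) * (\<Sum>p\<in>{p. p \<le> k \<and> even (w + p)}. ?T p)"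
    unfolding q1_def md by (rule refl)
  also have "(\<Sum>p\<in>{p. p \<le> k \<and> even (w + p)}. ?T p) = (\<Sum>p\<le>k. if even (w + p) then ?T p else 0)"
    unfolding set by (rule sum.inter_filter) simp
  also have "\<dots> = (\<Sum>p\<le>k. 2 powr (real w / 2) * (2 ^ k * real (if even (w + p) \<and> k \<le> ?h p
      then (k choose p) * 2 ^ p * ((m - k choose (?h p - k)) * 2 ^ (?h p - k)) else 0) / 2 ^ w))"
  proof (rule sum.cong[OF refl])
    fix p assume "p \<in> {..k}"
    show "(if even (w + p) then ?T p else 0) = 2 powr (real w / 2) * (2 ^ k * real (if even (w + p) \<and> k \<le> ?h p
      then (k choose p) * 2 ^ p * ((m - k choose (?h p - k)) * 2 ^ (?h p - k)) else 0) / 2 ^ w)"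
    proof (cases "even (w + p) \<and> k \<le> ?h p")
      case True
      then have h2: "2 * ?h p = w + p" by auto
      have pw: "(2::real) powr (3 * real p / 2) = 2 powr (real w / 2) * (2 ^ (p + ?h p) / 2 ^ w)"
        using powr_identity[OF h2] by (simp add: field_simps)
      have e2: "(2::real) ^ k * (2 ^ p * 2 ^ (?h p - k)) = 2 ^ (p + ?h p)"
        using True by (simp add: power_add[symmetric])
      define C1 where "C1 = real (k choose p)"
      define C2 where "C2 = real ((m - k) choose (?h p - k))"
      have r1: "(if even (w + p) then ?T p else 0) = C1 * C2 * 2 powr (3 * real p / 2)"
        using True by (simp add: C1_def C2_def)
      have r2: "real (if even (w + p) \<and> k \<le> ?h p
          then (k choose p) * 2 ^ p * ((m - k choose (?h p - k)) * 2 ^ (?h p - k)) else 0)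
          = C1 * C2 * (2 ^ p * 2 ^ (?h p - k))"
        using True by (simp add: C1_def C2_def)
      have "(if even (w + p) then ?T p else 0) = C1 * C2 * (2 powr (real w / 2) * (2 ^ (p + ?h p) / 2 ^ w))"
        by (subst r1) (simp only: pw)
      also have "\<dots> = 2 powr (real w / 2) * (C1 * C2 * (2 ^ k * (2 ^ p * 2 ^ (?h p - k))) / 2 ^ w)"
        unfolding e2 by simp
      also have "\<dots> = 2 powr (real w / 2) * (2 ^ k * real (if even (w + p) \<and> k \<le> ?h p
          then (k choose p) * 2 ^ p * ((m - k choose (?h p - k)) * 2 ^ (?h p - k)) else 0) / 2 ^ w)"
        unfolding r2 by (simp add: ac_simps)
      finally show ?thesis .
    next
      case False then show ?thesis by auto
    qed
  qed
  also have "\<dots> = 2 powr (real w / 2) * (2 ^ k * real (G m w k) / 2 ^ w)"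
    unfolding G_closed by (simp add: sum_distrib_left sum_divide_distrib)
  finally show ?thesis by (simp add: field_simps)
qed


lemma fiber_count:
  fixes m w :: nat and a c v :: "nat \<Rightarrow> int"
  assumes ac12: "\<forall>j<m. a j \<in> {1,2} \<and> c j \<in> {1,2}" and v: "v \<in> F3vecs m"
  shows "card {e \<in> sphere (2*m) w. (\<lambda>j. if j < m then (- c j * e j + a j * e (m + j)) mod 3 else 0) = v}
       = G m w (hweight m v)"
proof -
  define eV where "eV e = (\<lambda>j. if j < m then (- c j * e j + a j * e (m + j)) mod 3 else 0)" for e :: "nat \<Rightarrow> int"
  define \<beta> where "\<beta> e = (\<lambda>j. if j < m then (e j, e (m + j)) else (0::int, 0::int))" for e :: "nat \<Rightarrow> int"
  define \<gamma> where "\<gamma> p = (\<lambda>i. if i < m then fst (p i) else if i < 2*m then snd (p (i - m)) else (0::int))"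
    for p :: "nat \<Rightarrow> int \<times> int"
  define Bv where "Bv j = {xy \<in> {0,1,2::int} \<times> {0,1,2::int}. (- c j * fst xy + a j * snd xy) mod 3 = v j}" for j
  define bw where "bw xy = nz (fst xy) + nz (snd xy)" for xy :: "int \<times> int"
  define Src where "Src = {e \<in> sphere (2*m) w. eV e = v}"
  define Tgt where "Tgt = {p \<in> vset {..<m} Bv (0,0). (\<Sum>j<m. bw (p j)) = w}"
  have vj2: "j \<ge> m \<Longrightarrow> v j = 0" for j using v by (auto simp: F3vecs_def)
  have vj1: "v j \<in> {0,1,2}" for j
  proof (cases "j < m")
    case True then show ?thesis using v by (auto simp: F3vecs_def)
  next
    case False then show ?thesis using vj2[of j] by simp
  qed
  have wsum: "(\<Sum>i<2*m. nz (e i)) = (\<Sum>j<m. bw (\<beta> e j))" for e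
  proof -
    have "(\<Sum>i<2*m. nz (e i)) = (\<Sum>i<m+m. nz (e i))" by (simp add: mult_2)
    also have "\<dots> = (\<Sum>j<m. nz (e j)) + (\<Sum>j<m. nz (e (m + j)))" by (rule sum_split2)
    also have "\<dots> = (\<Sum>j<m. nz (e j) + nz (e (m + j)))" by (simp add: sum.distrib)
    also have "\<dots> = (\<Sum>j<m. bw (\<beta> e j))" by (rule sum.cong) (simp_all add: bw_def \<beta>_def)
    finally show ?thesis .
  qed
  have sph: "e \<in> sphere (2*m) w \<longleftrightarrow> e \<in> F3vecs (2*m) \<and> (\<Sum>i<2*m. nz (e i)) = w" for e
    by (simp add: sphere_def hweight_sum)
  have bij: "bij_betw \<beta> Src Tgt"
  proof (rule bij_betw_byWitness[where f'=\<gamma>])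
    show "\<forall>e\<in>Src. \<gamma> (\<beta> e) = e"
    proof
      fix e assume "e \<in> Src"
      then have e: "e \<in> F3vecs (2*m)" by (simp add: Src_def sph)
      show "\<gamma> (\<beta> e) = e"
      proof (rule ext)
        fix i
        consider "i < m" | "m \<le> i" "i < 2*m" | "2*m \<le> i" by linarith
        then show "\<gamma> (\<beta> e) i = e i"
        proof cases
          case 1 then show ?thesis by (simp add: \<gamma>_def \<beta>_def)
        next
          case 2 then show ?thesis by (simp add: \<gamma>_def \<beta>_def)
        next
          case 3 then show ?thesis using e by (simp add: \<gamma>_def F3vecs_def)
        qed
      qed
    qed
    show "\<forall>p\<in>Tgt. \<beta> (\<gamma> p) = p"
    proof
      fix p assume "p \<in> Tgt"
      then have p: "p \<in> vset {..<m} Bv (0,0)" by (simp add: Tgt_def)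
      show "\<beta> (\<gamma> p) = p"
      proof (rule ext)
        fix j show "\<beta> (\<gamma> p) j = p j"
        proof (cases "j < m")
          case True then show ?thesis by (simp add: \<gamma>_def \<beta>_def)
        next
          case False then show ?thesis using p by (simp add: \<beta>_def vset_def)
        qed
      qed
    qed
    show "\<beta> ` Src \<subseteq> Tgt"
    proof
      fix q assume "q \<in> \<beta> ` Src"
      then obtain e where eS: "e \<in> Src" and q: "q = \<beta> e" by auto
      have e: "e \<in> F3vecs (2*m)" "(\<Sum>i<2*m. nz (e i)) = w" "eV e = v" using eS by (auto simp: Src_def sph)
      have "\<beta> e \<in> vset {..<m} Bv (0,0)" unfolding vset_def
      proof (intro CollectI conjI ballI allI impI)
        fix j assume j: "j \<in> {..<m}"
        have "e j \<in> {0,1,2}" "e (m + j) \<in> {0,1,2}" using e(1) j by (auto simp: F3vecs_def)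
        moreover have "(- c j * e j + a j * e (m + j)) mod 3 = v j"
        proof -
          have "eV e j = v j" using e(3) by simp
          then show ?thesis using j unfolding eV_def by simp
        qed
        ultimately show "\<beta> e j \<in> Bv j" using j unfolding \<beta>_def Bv_def by auto
      next
        fix j assume "j \<notin> {..<m}" then show "\<beta> e j = (0,0)" by (simp add: \<beta>_def)
      qed
      then show "q \<in> Tgt" using e(2) wsum q by (simp add: Tgt_def)
    qed
    show "\<gamma> ` Tgt \<subseteq> Src"
    proof
      fix q assume "q \<in> \<gamma> ` Tgt"
      then obtain p where pT: "p \<in> Tgt" and q: "q = \<gamma> p" by auto
      have p: "p \<in> vset {..<m} Bv (0,0)" "(\<Sum>j<m. bw (p j)) = w" using pT by (auto simp: Tgt_def)
      have pB: "p j \<in> Bv j" if "j < m" for j using p(1) that by (simp add: vset_def)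
      have bg: "\<beta> (\<gamma> p) = p"
      proof (rule ext)
        fix j show "\<beta> (\<gamma> p) j = p j"
        proof (cases "j < m")
          case True then show ?thesis by (simp add: \<gamma>_def \<beta>_def)
        next
          case False then show ?thesis using p(1) by (simp add: \<beta>_def vset_def)
        qed
      qed
      have "\<gamma> p \<in> F3vecs (2*m)" unfolding F3vecs_def
      proof (intro CollectI conjI allI impI)
        fix i assume i: "i < 2*m"
        show "\<gamma> p i \<in> {0,1,2}"
        proof (cases "i < m")
          case True then show ?thesis using pB[of i] by (auto simp: \<gamma>_def Bv_def)
        next
          case False
          then have "i - m < m" using i by simp
          then show ?thesis using pB[of "i - m"] False i by (auto simp: \<gamma>_def Bv_def)
        qed
      next
        fix i assume "2*m \<le> i" then show "\<gamma> p i = 0" by (simp add: \<gamma>_def)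
      qed
      moreover have "(\<Sum>i<2*m. nz (\<gamma> p i)) = w" using wsum[of "\<gamma> p"] bg p(2) by simp
      moreover have "eV (\<gamma> p) = v"
      proof (rule ext)
        fix j show "eV (\<gamma> p) j = v j"
        proof (cases "j < m")
          case True
          then have "(- c j * fst (p j) + a j * snd (p j)) mod 3 = v j" using pB[of j] by (auto simp: Bv_def)
          then show ?thesis using True by (simp add: eV_def \<gamma>_def)
        next
          case False then show ?thesis using vj2[of j] by (simp add: eV_def)
        qed
      qed
      ultimately show "q \<in> Src" using q by (simp add: Src_def sph)
    qed
  qed
  have "card Src = card Tgt" using bij by (rule bij_betw_same_card)
  also have "card Tgt = coeff (\<Prod>j<m. \<Sum>xy\<in>Bv j. monom (1::nat) (bw xy)) w"
    unfolding Tgt_def by (rule card_vset_weight) (auto simp: Bv_def)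
  also have "(\<Prod>j<m. \<Sum>xy\<in>Bv j. monom (1::nat) (bw xy)) = (\<Prod>j<m. if v j = 0 then A0 else A1)"
  proof (rule prod.cong[OF refl])
    fix j assume "j \<in> {..<m}"
    then have "a j \<in> {1,2}" "c j \<in> {1,2}" using ac12 by auto
    then show "(\<Sum>xy\<in>Bv j. monom (1::nat) (bw xy)) = (if v j = 0 then A0 else A1)"
      unfolding Bv_def bw_def using vj1[of j] by (rule blockpoly)
  qed
  also have "\<dots> = (\<Prod>j\<in>{..<m} \<inter> {j. v j = 0}. A0) * (\<Prod>j\<in>{..<m} \<inter> - {j. v j = 0}. A1)"
    by (rule prod.If_cases) simp
  also have "\<dots> = A0 ^ (m - hweight m v) * A1 ^ (hweight m v)"
  proof -
    have h: "hweight m v = card ({..<m} \<inter> - {j. v j = 0})"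
      unfolding hweight_def by (rule arg_cong[where f=card]) auto
    have "card ({..<m} \<inter> {j. v j = 0}) + card ({..<m} \<inter> - {j. v j = 0}) = m"
      using card_Un_disjoint[of "{..<m} \<inter> {j. v j = 0}" "{..<m} \<inter> - {j. v j = 0}"]
      by (simp add: Int_Un_distrib[symmetric] Int_assoc)
    then have "card ({..<m} \<inter> {j. v j = 0}) = m - hweight m v" using h by simp
    then show ?thesis using h by simp
  qed
  also have "coeff (A0 ^ (m - hweight m v) * A1 ^ (hweight m v)) w = G m w (hweight m v)"
    by (simp add: G_def mult.commute)
  finally show ?thesis by (simp add: Src_def eV_def)
qed


lemma T2:
  fixes m w :: nat and a c :: "nat \<Rightarrow> int"
  assumes w: "w \<le> 2*m" and rng: "\<forall>i<m. a i \<in> {0,1,2} \<and> c i \<in> {0,1,2}" and ac: "\<forall>i<m. (a i * c i) mod 3 \<noteq> 0"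
  shows "real (card {p \<in> sphere (2*m) w \<times> sphere (2*m) w. \<forall>j<m. (3::int) dvd yV m a c (fst p) (snd p) j})
          / real (card (sphere (2*m) w))^2
        \<le> (\<Sum>j=0..m. (q1 (2*m) w j)^2 / (2 ^ j * real (m choose j)))"
proof -
  define S where "S = sphere (2*m) w"
  define eV where "eV e = (\<lambda>j. if j < m then (- c j * e j + a j * e (m + j)) mod 3 else 0)" for e :: "nat \<Rightarrow> int"
  define N where "N = real (card S)"
  have ac12: "\<forall>j<m. a j \<in> {1,2} \<and> c j \<in> {1,2}"
  proof (intro allI impI)
    fix j assume j: "j < m"
    have "a j \<in> {0,1,2}" "c j \<in> {0,1,2}" "(a j * c j) mod 3 \<noteq> 0" using rng ac j by auto
    then show "a j \<in> {1,2} \<and> c j \<in> {1,2}" by auto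
  qed
  have fS: "finite S" by (simp add: S_def finite_sphere)
  have zeq: "(\<forall>j<m. (3::int) dvd yV m a c e e' j) \<longleftrightarrow> eV e = eV e'" for e e'
  proof -
    have d: "yV m a c e e' j = (- c j * e j + a j * e (m + j)) - (- c j * e' j + a j * e' (m + j))" for j
      by (simp add: yV_def algebra_simps)
    show ?thesis
    proof
      assume A: "\<forall>j<m. (3::int) dvd yV m a c e e' j"
      show "eV e = eV e'"
      proof (rule ext)
        fix j show "eV e j = eV e' j"
        proof (cases "j < m")
          case True
          then have "3 dvd ((- c j * e j + a j * e (m + j)) - (- c j * e' j + a j * e' (m + j)))"
            using A d by metis
          then show ?thesis using True by (simp add: eV_def mod_eq_dvd_iff)
        qed (simp add: eV_def)
      qed
    next
      assume B: "eV e = eV e'"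
      show "\<forall>j<m. (3::int) dvd yV m a c e e' j"
      proof (intro allI impI)
        fix j assume j: "j < m"
        have "eV e j = eV e' j" using B by simp
        then have "(- c j * e j + a j * e (m + j)) mod 3 = (- c j * e' j + a j * e' (m + j)) mod 3"
          using j unfolding eV_def by simp
        then show "3 dvd yV m a c e e' j" unfolding d by (simp add: mod_eq_dvd_iff)
      qed
    qed
  qed
  have eVin: "eV ` S \<subseteq> F3vecs m" using mod3_cases by (auto simp: eV_def F3vecs_def)
  have "card {p \<in> S \<times> S. \<forall>j<m. (3::int) dvd yV m a c (fst p) (snd p) j}
      = card {p \<in> S \<times> S. eV (fst p) = eV (snd p)}" using zeq by simp
  also have "\<dots> = (\<Sum>v\<in>F3vecs m. card {e \<in> S. eV e = v} ^ 2)"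
    by (rule card_pairs_fibers[OF fS finite_F3vecs eVin])
  also have "\<dots> = (\<Sum>v\<in>F3vecs m. G m w (hweight m v) ^ 2)"
  proof (rule sum.cong[OF refl])
    fix v assume "v \<in> F3vecs m"
    then have "card {e \<in> S. eV e = v} = G m w (hweight m v)"
      unfolding S_def eV_def by (rule fiber_count[OF ac12])
    then show "card {e \<in> S. eV e = v} ^ 2 = G m w (hweight m v) ^ 2" by simp
  qed
  also have "\<dots> = (\<Sum>k\<in>{0..m}. \<Sum>v\<in>{v. v \<in> F3vecs m \<and> hweight m v = k}. G m w (hweight m v) ^ 2)"
  proof (rule sum.group[symmetric, OF finite_F3vecs])
    show "finite {0..m}" by simp
    show "hweight m ` F3vecs m \<subseteq> {0..m}"
    proof
      fix k assume "k \<in> hweight m ` F3vecs m"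
      then obtain v where "k = hweight m v" by auto
      moreover have "hweight m v \<le> m" unfolding hweight_def
        using card_mono[of "{..<m}" "{i. i < m \<and> v i \<noteq> 0}"] by auto
      ultimately show "k \<in> {0..m}" by simp
    qed
  qed
  also have "\<dots> = (\<Sum>k\<in>{0..m}. (m choose k) * 2 ^ k * G m w k ^ 2)"
  proof (rule sum.cong[OF refl])
    fix k
    have "card {v \<in> F3vecs m. hweight m v = k} = (m choose k) * 2 ^ k"
      unfolding F3vecs_vset hweight_sum using card_weight_012[of "{..<m}" k] by simp
    then show "(\<Sum>v\<in>{v. v \<in> F3vecs m \<and> hweight m v = k}. G m w (hweight m v) ^ 2) = (m choose k) * 2 ^ k * G m w k ^ 2"
      by simp
  qed
  finally have cnt: "card {p \<in> S \<times> S. \<forall>j<m. (3::int) dvd yV m a c (fst p) (snd p) j}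
      = (\<Sum>k\<in>{0..m}. (m choose k) * 2 ^ k * G m w k ^ 2)" .
  have N: "N = real ((2*m) choose w) * 2 ^ w" by (simp add: N_def S_def card_sphere)
  have Npos: "real ((2*m) choose w) > 0" using w by simp
  have trm: "real ((m choose k) * 2 ^ k * G m w k ^ 2) / N^2 = (q1 (2*m) w k)^2 / (2 ^ k * real (m choose k))"
    if k: "k \<in> {0..m}" for k
  proof -
    have Cpos: "real (m choose k) > 0" using k by simp
    have qe: "q1 (2*m) w k = real (m choose k) * 2 ^ k * real (G m w k) / N"
      using q1_G[of k m w] k N by simp
    have NN: "N > 0" using N Npos by simp
    show ?thesis unfolding qe using Cpos NN
      by (simp add: field_simps power2_eq_square)
  qed
  have "real (card {p \<in> S \<times> S. \<forall>j<m. (3::int) dvd yV m a c (fst p) (snd p) j}) / N^2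
      = (\<Sum>k\<in>{0..m}. real ((m choose k) * 2 ^ k * G m w k ^ 2) / N^2)"
    unfolding cnt by (simp add: sum_divide_distrib)
  also have "\<dots> = (\<Sum>k\<in>{0..m}. (q1 (2*m) w k)^2 / (2 ^ k * real (m choose k)))"
    by (rule sum.cong[OF refl]) (rule trm)
  finally show ?thesis by (simp add: S_def N_def)
qed


lemma sum_if_real: "finite A \<Longrightarrow> (\<Sum>x\<in>A. if P x then (c::real) else 0) = c * real (card {x\<in>A. P x})"
  by (simp add: sum.If_cases Int_def)

lemma div_helper: "(K::real) \<noteq> 0 \<Longrightarrow> (A * (K * X) - K) / K = A * X - 1"
  by (simp add: field_simps)

lemma alg_helper: "(N::real) > 0 \<Longrightarrow> (u::real) > 0 \<Longrightarrow> v > 0 \<Longrightarrow>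
   (u*v) / N^2 * (N + N^2 / (u*v) + nV / u + nU / v) - 1 = (u*v) / N + v * nV / N^2 + u * nU / N^2"
  by (simp add: field_simps power2_eq_square)

lemma main_bound:
  fixes m kU kV w :: nat and a b c d :: "nat \<Rightarrow> int"
  assumes kU: "kU \<le> m" and kV: "kV \<le> m" and w: "w \<le> 2*m"
    and rng: "\<forall>i<m. a i \<in> {0,1,2} \<and> b i \<in> {0,1,2} \<and> c i \<in> {0,1,2} \<and> d i \<in> {0,1,2}"
    and det: "\<forall>i<m. (a i * d i - b i * c i) mod 3 = 1"
    and ac: "\<forall>i<m. (a i * c i) mod 3 \<noteq> 0"
  shows "(\<Sum>HU\<in>F3mats (m - kU) m. \<Sum>HV\<in>F3mats (m - kV) m.
            dist_to_unif ((m - kU) + (m - kV)) (2*m) w (Hsk m kU kV a b c d HU HV))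
         / (real (card (F3mats (m - kU) m)) * real (card (F3mats (m - kV) m)))
       \<le> 1/2 * sqrt (eps (2*m) kU kV w (nI m b d))"
proof -
  define rU where "rU = m - kU"
  define rV where "rV = m - kV"
  define r where "r = rU + rV"
  define S where "S = sphere (2*m) w"
  define N where "N = real (card S)"
  define MU where "MU = F3mats rU m"
  define MV where "MV = F3mats rV m"
  define cU where "cU = real (card MU)"
  define cV where "cV = real (card MV)"
  define Hs where "Hs HU HV = Hsk m kU kV a b c d HU HV" for HU HV
  define Y where "Y q = 3 ^ r * real (col r (2*m) w (Hs (fst q) (snd q))) / N^2 - 1" for q
  define zU where "zU p = (\<forall>j<m. (3::int) dvd yU m b d (fst p) (snd p) j)" for p
  define zV where "zV p = (\<forall>j<m. (3::int) dvd yV m a c (fst p) (snd p) j)" for p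
  define nU where "nU = real (card {p \<in> S \<times> S. zU p})"
  define nV where "nV = real (card {p \<in> S \<times> S. zV p})"
  have Npos: "N > 0" unfolding N_def S_def card_sphere using w by simp
  have cUv: "cU = 3 ^ (rU * m)" by (simp add: cU_def MU_def card_F3mats)
  have cVv: "cV = 3 ^ (rV * m)" by (simp add: cV_def MV_def card_F3mats)
  have fMU: "finite MU" and fMV: "finite MV" by (simp_all add: MU_def MV_def finite_F3mats)
  have fS: "finite S" by (simp add: S_def finite_sphere)
  have K: "real (card (MU \<times> MV)) = cU * cV" by (simp add: cU_def cV_def card_cartesian_product)
  have Kpos: "cU * cV > 0" by (simp add: cUv cVv)
  have Yge: "0 \<le> Y q" for q unfolding Y_def N_def S_def using dist_CS(1)[OF w] by blast
  have "(\<Sum>HU\<in>MU. \<Sum>HV\<in>MV. dist_to_unif r (2*m) w (Hs HU HV))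
      \<le> (\<Sum>HU\<in>MU. \<Sum>HV\<in>MV. 1/2 * sqrt (Y (HU, HV)))"
  proof (intro sum_mono)
    fix HU HV
    show "dist_to_unif r (2*m) w (Hs HU HV) \<le> 1/2 * sqrt (Y (HU, HV))"
      using dist_CS(2)[OF w, of r "Hs HU HV"] unfolding Y_def N_def S_def by simp
  qed
  also have "\<dots> = 1/2 * (\<Sum>q\<in>MU \<times> MV. sqrt (Y q))"
    by (simp add: sum.cartesian_product sum_distrib_left)
  finally have st0: "(\<Sum>HU\<in>MU. \<Sum>HV\<in>MV. dist_to_unif r (2*m) w (Hs HU HV))
      \<le> 1/2 * (\<Sum>q\<in>MU \<times> MV. sqrt (Y q))" .
  have st1: "(\<Sum>HU\<in>MU. \<Sum>HV\<in>MV. dist_to_unif r (2*m) w (Hs HU HV)) / (cU * cV)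
      \<le> 1/2 * ((\<Sum>q\<in>MU \<times> MV. sqrt (Y q)) / (cU * cV))"
  proof -
    have "(\<Sum>HU\<in>MU. \<Sum>HV\<in>MV. dist_to_unif r (2*m) w (Hs HU HV)) / (cU * cV)
      \<le> (1/2 * (\<Sum>q\<in>MU \<times> MV. sqrt (Y q))) / (cU * cV)"
      by (rule divide_right_mono[OF st0]) (use Kpos in simp)
    then show ?thesis by simp
  qed
  have ne: "MU \<times> MV \<noteq> {}" using Kpos K by auto
  have st2: "(\<Sum>q\<in>MU \<times> MV. sqrt (Y q)) / (cU * cV) \<le> sqrt ((\<Sum>q\<in>MU \<times> MV. Y q) / (cU * cV))"
    using sqrt_avg[of "MU \<times> MV" Y] fMU fMV ne Yge K by simp
  have sumcol: "(\<Sum>q\<in>MU \<times> MV. real (col r (2*m) w (Hs (fst q) (snd q))))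
      = (\<Sum>p\<in>S \<times> S. real (cnt rU m (yU m b d (fst p) (snd p))) * real (cnt rV m (yV m a c (fst p) (snd p))))"
  proof -
    have "(\<Sum>q\<in>MU \<times> MV. real (col r (2*m) w (Hs (fst q) (snd q))))
        = real (\<Sum>HU\<in>MU. \<Sum>HV\<in>MV. col r (2*m) w (Hs HU HV))"
      by (simp add: sum.cartesian_product case_prod_beta)
    also have "(\<Sum>HU\<in>MU. \<Sum>HV\<in>MV. col r (2*m) w (Hs HU HV))
        = (\<Sum>p\<in>S \<times> S. cnt rU m (yU m b d (fst p) (snd p)) * cnt rV m (yV m a c (fst p) (snd p)))"
      unfolding MU_def MV_def r_def rU_def rV_def Hs_def S_def by (rule sum_col[OF kU])
    finally show ?thesis by simp
  qed
  have cntU: "real (cnt rU m (yU m b d (fst p) (snd p))) = cU * (if zU p then 1 else 1 / 3 ^ rU)" for p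
  proof (cases "zU p")
    case True then show ?thesis by (simp add: zU_def cnt_zero cUv)
  next
    case False
    then obtain k where "k < m" "\<not> (3::int) dvd yU m b d (fst p) (snd p) k" by (auto simp: zU_def)
    then show ?thesis using False by (simp add: cnt_nonzero cUv)
  qed
  have cntV: "real (cnt rV m (yV m a c (fst p) (snd p))) = cV * (if zV p then 1 else 1 / 3 ^ rV)" for p
  proof (cases "zV p")
    case True then show ?thesis by (simp add: zV_def cnt_zero cVv)
  next
    case False
    then obtain k where "k < m" "\<not> (3::int) dvd yV m a c (fst p) (snd p) k" by (auto simp: zV_def)
    then show ?thesis using False by (simp add: cnt_nonzero cVv)
  qed
  have detm: "\<forall>j<m. (a j * d j - b j * c j) mod 3 = 1" using det by simp
  have ptw: "(if zU p then 1 else 1 / 3 ^ rU) * (if zV p then 1 else 1 / 3 ^ rV)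
      \<le> (if fst p = snd p then 1 else 0) + 1 / 3 ^ r + (if zV p then 1 / 3 ^ rU else 0)
         + (if zU p then 1 / 3 ^ rV else (0::real))" if p: "p \<in> S \<times> S" for p
  proof -
    have pos: "(0::real) \<le> 1 / 3 ^ r" "(0::real) \<le> 1 / 3 ^ rU" "(0::real) \<le> 1 / 3 ^ rV" by simp_all
    show ?thesis
    proof (cases "zU p")
      case zu: True
      show ?thesis
      proof (cases "zV p")
        case True
        have F: "fst p \<in> F3vecs (2*m)" "snd p \<in> F3vecs (2*m)" using p by (auto simp: S_def sphere_def)
        have "fst p = snd p"
          by (rule yUV_zero_eq[OF F detm]) (use zu True in \<open>simp_all add: zU_def zV_def\<close>)
        then show ?thesis using zu True pos by simp
      next
        case False then show ?thesis using zu pos by simp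
      qed
    next
      case zu: False
      show ?thesis
      proof (cases "zV p")
        case True then show ?thesis using zu pos by simp
      next
        case False then show ?thesis using zu pos by (simp add: r_def power_add)
      qed
    qed
  qed
  have diag: "real (card {p \<in> S \<times> S. fst p = snd p}) \<le> N"
  proof -
    have "{p \<in> S \<times> S. fst p = snd p} = (\<lambda>e. (e, e)) ` S" by auto
    then show ?thesis unfolding N_def by (simp add: card_image_le fS)
  qed
  have cSS: "real (card (S \<times> S)) = N^2" by (simp add: N_def card_cartesian_product power2_eq_square)
  have st3: "(\<Sum>p\<in>S \<times> S. real (cnt rU m (yU m b d (fst p) (snd p))) * real (cnt rV m (yV m a c (fst p) (snd p))))
      \<le> cU * cV * (N + N^2 / 3 ^ r + nV / 3 ^ rU + nU / 3 ^ rV)"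
  proof -
    have "(\<Sum>p\<in>S \<times> S. real (cnt rU m (yU m b d (fst p) (snd p))) * real (cnt rV m (yV m a c (fst p) (snd p))))
        = cU * cV * (\<Sum>p\<in>S \<times> S. (if zU p then 1 else 1 / 3 ^ rU) * (if zV p then 1 else 1 / 3 ^ rV))"
      by (simp add: cntU cntV sum_distrib_left mult_ac)
    also have "(\<Sum>p\<in>S \<times> S. (if zU p then 1 else 1 / 3 ^ rU) * (if zV p then 1 else 1 / 3 ^ rV))
        \<le> (\<Sum>p\<in>S \<times> S. (if fst p = snd p then 1 else 0) + 1 / 3 ^ r + (if zV p then 1 / 3 ^ rU else 0)
         + (if zU p then 1 / 3 ^ rV else (0::real)))"
      by (rule sum_mono) (rule ptw)
    also have "\<dots> = real (card {p \<in> S \<times> S. fst p = snd p}) + N^2 / 3 ^ r + nV / 3 ^ rU + nU / 3 ^ rV"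
      using fS by (simp add: sum.distrib sum_if_real nU_def nV_def N_def power2_eq_square card_cartesian_product)
    also have "\<dots> \<le> N + N^2 / 3 ^ r + nV / 3 ^ rU + nU / 3 ^ rV" using diag by simp
    finally show ?thesis using Kpos by (simp add: mult_left_mono)
  qed
  have st4: "(\<Sum>q\<in>MU \<times> MV. Y q) / (cU * cV) \<le> 3 ^ r / N + 3 ^ rV * nV / N^2 + 3 ^ rU * nU / N^2"
  proof -
    have "(\<Sum>q\<in>MU \<times> MV. Y q) = 3 ^ r / N^2 * (\<Sum>q\<in>MU \<times> MV. real (col r (2*m) w (Hs (fst q) (snd q)))) - cU * cV"
      by (simp add: Y_def sum_subtractf sum_distrib_left K sum_divide_distrib)
    also have "\<dots> \<le> 3 ^ r / N^2 * (cU * cV * (N + N^2 / 3 ^ r + nV / 3 ^ rU + nU / 3 ^ rV)) - cU * cV"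
      unfolding sumcol by (intro diff_right_mono mult_left_mono st3) simp
    finally have "(\<Sum>q\<in>MU \<times> MV. Y q) / (cU * cV)
        \<le> (3 ^ r / N^2 * (cU * cV * (N + N^2 / 3 ^ r + nV / 3 ^ rU + nU / 3 ^ rV)) - cU * cV) / (cU * cV)"
      using Kpos by (simp add: divide_right_mono)
    also have "\<dots> = 3 ^ r / N^2 * (N + N^2 / 3 ^ r + nV / 3 ^ rU + nU / 3 ^ rV) - 1"
      by (rule div_helper) (use Kpos in auto)
    also have "\<dots> = 3 ^ r / N + 3 ^ rV * nV / N^2 + 3 ^ rU * nU / N^2"
      unfolding r_def power_add by (rule alg_helper) (use Npos in simp_all)
    finally show ?thesis .
  qed
  have t2: "nV / N^2 \<le> (\<Sum>j=0..m. (q1 (2*m) w j)^2 / (2 ^ j * real (m choose j)))"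
    unfolding nV_def N_def S_def zV_def using T2[OF w] rng ac by auto
  have t3: "nU / N^2 \<le> (\<Sum>j=0..nI m b d. real (nI m b d choose j) * (if j \<le> w then real ((2*m - nI m b d) choose (w - j)) else 0)^2
              / (real ((2*m) choose w) ^ 2 * 2 ^ j))"
    unfolding nU_def N_def S_def zU_def using T3[OF w rng det] by auto
  have eps_eq: "eps (2*m) kU kV w (nI m b d) = 3 ^ r / N
      + 3 ^ rV * (\<Sum>j=0..m. (q1 (2*m) w j)^2 / (2 ^ j * real (m choose j)))
      + 3 ^ rU * (\<Sum>j=0..nI m b d. real (nI m b d choose j) * (if j \<le> w then real ((2*m - nI m b d) choose (w - j)) else 0)^2
              / (real ((2*m) choose w) ^ 2 * 2 ^ j))"
  proof -
    have "2 * m - (kU + kV) = r" using kU kV by (simp add: r_def rU_def rV_def)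
    moreover have "N = 2 ^ w * real ((2*m) choose w)" by (simp add: N_def S_def card_sphere)
    ultimately show ?thesis by (simp add: eps_def rU_def rV_def)
  qed
  have st5: "3 ^ r / N + 3 ^ rV * nV / N^2 + 3 ^ rU * nU / N^2 \<le> eps (2*m) kU kV w (nI m b d)"
  proof -
    have "3 ^ rV * nV / N^2 \<le> 3 ^ rV * (\<Sum>j=0..m. (q1 (2*m) w j)^2 / (2 ^ j * real (m choose j)))"
      using t2 by (simp add: mult_left_mono divide_inverse mult.assoc)
    moreover have "3 ^ rU * nU / N^2 \<le> 3 ^ rU * (\<Sum>j=0..nI m b d. real (nI m b d choose j) * (if j \<le> w then real ((2*m - nI m b d) choose (w - j)) else 0)^2
              / (real ((2*m) choose w) ^ 2 * 2 ^ j))"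
      using t3 by (simp add: mult_left_mono divide_inverse mult.assoc)
    ultimately show ?thesis unfolding eps_eq by linarith
  qed
  have "(\<Sum>HU\<in>MU. \<Sum>HV\<in>MV. dist_to_unif r (2*m) w (Hs HU HV)) / (cU * cV)
      \<le> 1/2 * sqrt ((\<Sum>q\<in>MU \<times> MV. Y q) / (cU * cV))"
    using st1 st2 by linarith
  also have "\<dots> \<le> 1/2 * sqrt (eps (2*m) kU kV w (nI m b d))"
    using st4 st5 by simp
  finally show ?thesis by (simp add: MU_def MV_def cU_def cV_def r_def rU_def rV_def Hs_def)
qed


theorem proposition7:
  fixes n kU kV w :: nat and a b c d :: "nat \<Rightarrow> int"
  assumes "even n"
    and "kU \<le> n div 2" and "kV \<le> n div 2"
    and "w \<le> n"
    and "\<forall>i < n div 2. a i \<in> {0,1,2} \<and> b i \<in> {0,1,2} \<and> c i \<in> {0,1,2} \<and> d i \<in> {0,1,2}"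
    and "\<forall>i < n div 2. (a i * d i - b i * c i) mod 3 = 1"
    and "\<forall>i < n div 2. (a i * c i) mod 3 \<noteq> 0"
  shows "(\<Sum>HU \<in> F3mats (n div 2 - kU) (n div 2). \<Sum>HV \<in> F3mats (n div 2 - kV) (n div 2).
          \<Sum>S \<in> F3invertible (n - (kU + kV)). \<Sum>\<pi> \<in> {\<pi>. \<pi> permutes {..<n}}.
            dist_to_unif (n - (kU + kV)) n w (Hpk (n div 2) kU kV a b c d HU HV S \<pi>))
         / (real (card (F3mats (n div 2 - kU) (n div 2))) * real (card (F3mats (n div 2 - kV) (n div 2)))
            * real (card (F3invertible (n - (kU + kV)))) * real (card {\<pi>. \<pi> permutes {..<n}}))
       \<le> 1/2 * sqrt (eps n kU kV w (nI (n div 2) b d))"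
proof -
  obtain m where n2: "n = 2*m" using assms(1) by blast
  have md: "n div 2 = m" using n2 by simp
  have kU: "kU \<le> m" and kV: "kV \<le> m" using assms(2,3) md by auto
  have w: "w \<le> 2*m" using assms(4) n2 by simp
  have rng: "\<forall>i<m. a i \<in> {0,1,2} \<and> b i \<in> {0,1,2} \<and> c i \<in> {0,1,2} \<and> d i \<in> {0,1,2}"
    using assms(5) md by simp
  have det: "\<forall>i<m. (a i * d i - b i * c i) mod 3 = 1" using assms(6) md by simp
  have ac: "\<forall>i<m. (a i * c i) mod 3 \<noteq> 0" using assms(7) md by simp
  define r where "r = (m - kU) + (m - kV)"
  have rr: "n - (kU + kV) = r" using kU kV n2 by (simp add: r_def)
  let ?SI = "F3invertible r" and ?PI = "{\<pi>. \<pi> permutes {..<2*m}}"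
  let ?MU = "F3mats (m - kU) m" and ?MV = "F3mats (m - kV) m"
  let ?D = "\<lambda>HU HV. dist_to_unif r (2*m) w (Hsk m kU kV a b c d HU HV)"
  define cS where "cS = real (card ?SI)"
  define cP where "cP = real (card ?PI)"
  have inner: "(\<Sum>S\<in>?SI. \<Sum>\<pi>\<in>?PI. dist_to_unif r (2*m) w (Hpk m kU kV a b c d HU HV S \<pi>))
      = cS * cP * ?D HU HV" for HU HV
  proof -
    have "(\<Sum>S\<in>?SI. \<Sum>\<pi>\<in>?PI. dist_to_unif r (2*m) w (Hpk m kU kV a b c d HU HV S \<pi>))
        = (\<Sum>S\<in>?SI. \<Sum>\<pi>\<in>?PI. ?D HU HV)"
    proof (intro sum.cong refl)
      fix S \<pi> assume S: "S \<in> ?SI" and p: "\<pi> \<in> ?PI"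
      have "Hpk m kU kV a b c d HU HV S \<pi>
          = mmul r r (2*m) S (mmul r (2*m) (2*m) (Hsk m kU kV a b c d HU HV) (perm_mat (2*m) \<pi>))"
        by (simp add: Hpk_def r_def Let_def)
      then show "dist_to_unif r (2*m) w (Hpk m kU kV a b c d HU HV S \<pi>) = ?D HU HV"
        using dist_mmul_inv[OF S] dist_perm p by simp
    qed
    also have "\<dots> = cS * cP * ?D HU HV" by (simp add: cS_def cP_def)
    finally show ?thesis .
  qed
  have LHS: "(\<Sum>HU\<in>?MU. \<Sum>HV\<in>?MV. \<Sum>S\<in>?SI. \<Sum>\<pi>\<in>?PI. dist_to_unif r (2*m) w (Hpk m kU kV a b c d HU HV S \<pi>))
      / (real (card ?MU) * real (card ?MV) * cS * cP)
      \<le> 1/2 * sqrt (eps (2*m) kU kV w (nI m b d))"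
  proof (cases "cS * cP = 0")
    case True
    have z: "real (card ?MU) * real (card ?MV) * cS * cP = 0" using True by simp
    have "0 \<le> eps (2*m) kU kV w (nI m b d)" unfolding eps_def
      by (intro add_nonneg_nonneg mult_nonneg_nonneg sum_nonneg divide_nonneg_nonneg) auto
    then show ?thesis unfolding z by simp
  next
    case False
    have "(\<Sum>HU\<in>?MU. \<Sum>HV\<in>?MV. \<Sum>S\<in>?SI. \<Sum>\<pi>\<in>?PI. dist_to_unif r (2*m) w (Hpk m kU kV a b c d HU HV S \<pi>))
        = cS * cP * (\<Sum>HU\<in>?MU. \<Sum>HV\<in>?MV. ?D HU HV)"
      by (simp add: inner sum_distrib_left)
    then have "(\<Sum>HU\<in>?MU. \<Sum>HV\<in>?MV. \<Sum>S\<in>?SI. \<Sum>\<pi>\<in>?PI. dist_to_unif r (2*m) w (Hpk m kU kV a b c d HU HV S \<pi>))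
      / (real (card ?MU) * real (card ?MV) * cS * cP)
      = (\<Sum>HU\<in>?MU. \<Sum>HV\<in>?MV. ?D HU HV) / (real (card ?MU) * real (card ?MV))"
      using False by simp
    also have "\<dots> \<le> 1/2 * sqrt (eps (2*m) kU kV w (nI m b d))"
      unfolding r_def by (rule main_bound[OF kU kV w rng det ac])
    finally show ?thesis .
  qed
  show ?thesis unfolding rr md using LHS unfolding n2 cS_def cP_def by simp
qed

end
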